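(* Let $\mathscr{A}$ be a $C^*$-algebra, let $\mathscr{X},\mathscr{Y}$ be inner product (pre-Hilbert) $\mathscr{A}$-modules, let $T\colon\mathscr{X}\to\mathscr{Y}$ be a nonvanishing mapping, and let $\gamma\in(0,+\infty)$. Then the following are equivalent: (i) $\langle Tx,Ty\rangle=\gamma^2\langle x,y\rangle$ for all $x,y\in\mathscr{X}$; (ii) $T$ is $\mathscr{A}$-linear and $|Tx|=\gamma|x|$ for all $x\in\mathscr{X}$; (iii) $T$ is ($\mathbb{C}$-)linear and $|Tx|=\gamma|x|$ for all $x\in\mathscr{X}$.
   Context: An inner product $\mathscr{A}$-module is a right $\mathscr{A}$-module $\mathscr{X}$ (complex vector space with compatible right $\mathscr{A}$-action) with an $\mathscr{A}$-valued map $\langle\cdot,\cdot\rangle$ that is linear in the second variable, satisfies $\langle x,ya\rangle=\langle x,y\rangle a$, $\langle x,y\rangle=\langle y,x\rangle^*$, and $\langle x,x\rangle\ge0$ with equality iff $x=0$; completeness is not assumed. For $z$ in such a module, $|z|$ denotes the positive square root of $\langle z,z\rangle$. $T$ is $\mathscr{A}$-linear if it is linear and $T(xa)=(Tx)a$ for all $x$ and $a\in\mathscr{A}$. Nonvanishing means $T$ is not identically zero. *)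

theory Defs
  imports "HOL-Analysis.Analysis"
begin

definition complex_vs :: "(complex \<Rightarrow> 'v::ab_group_add \<Rightarrow> 'v) \<Rightarrow> bool" where
  "complex_vs sm \<longleftrightarrow>
     (\<forall>c x y. sm c (x + y) = sm c x + sm c y) \<and>
     (\<forall>c d x. sm (c + d) x = sm c x + sm d x) \<and>
     (\<forall>c d x. sm (c * d) x = sm c (sm d x)) \<and>
     (\<forall>x. sm 1 x = x)"

text \<open>A C*-algebra: a (not necessarily unital) Banach algebra (type class gives the real
  Banach algebra structure: associative multiplication, submultiplicative norm, completeness),
  whose complex scalar multiplication is sm, together with an involution st satisfying the
  C*-identity.\<close>
definition cstar_algebra ::
  "(complex \<Rightarrow> 'a::{real_normed_algebra,banach} \<Rightarrow> 'a) \<Rightarrow> ('a \<Rightarrow> 'a) \<Rightarrow> bool" where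
  "cstar_algebra sm st \<longleftrightarrow>
     complex_vs sm \<and>
     (\<forall>r a. sm (complex_of_real r) a = scaleR r a) \<and>
     (\<forall>c a b. sm c (a * b) = sm c a * b \<and> sm c (a * b) = a * sm c b) \<and>
     (\<forall>c a. norm (sm c a) = cmod c * norm a) \<and>
     (\<forall>a b. st (a + b) = st a + st b) \<and>
     (\<forall>c a. st (sm c a) = sm (cnj c) (st a)) \<and>
     (\<forall>a b. st (a * b) = st b * st a) \<and>
     (\<forall>a. st (st a) = a) \<and>
     (\<forall>a. norm (st a * a) = (norm a)\<^sup>2)"

definition cstar_positive :: "('a::{real_normed_algebra,banach} \<Rightarrow> 'a) \<Rightarrow> 'a \<Rightarrow> bool" where
  "cstar_positive st a \<longleftrightarrow> (\<exists>b. a = st b * b)"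

definition cstar_sqrt :: "('a::{real_normed_algebra,banach} \<Rightarrow> 'a) \<Rightarrow> 'a \<Rightarrow> 'a" where
  "cstar_sqrt st a = (THE b. cstar_positive st b \<and> b * b = a)"

text \<open>Inner product (pre-Hilbert) A-module: complex vector space X (scalar multiplication smX),
  right A-action act, A-valued inner product ip (no completeness).\<close>
definition ip_module ::
  "(complex \<Rightarrow> 'a::{real_normed_algebra,banach} \<Rightarrow> 'a) \<Rightarrow> ('a \<Rightarrow> 'a) \<Rightarrow>
   (complex \<Rightarrow> 'x::ab_group_add \<Rightarrow> 'x) \<Rightarrow> ('x \<Rightarrow> 'a \<Rightarrow> 'x) \<Rightarrow> ('x \<Rightarrow> 'x \<Rightarrow> 'a) \<Rightarrow> bool" where
  "ip_module sm st smX act ip \<longleftrightarrow>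
     complex_vs smX \<and>
     (\<forall>x y a. act (x + y) a = act x a + act y a) \<and>
     (\<forall>x a b. act x (a + b) = act x a + act x b) \<and>
     (\<forall>x a b. act x (a * b) = act (act x a) b) \<and>
     (\<forall>c x a. smX c (act x a) = act (smX c x) a \<and> smX c (act x a) = act x (sm c a)) \<and>
     (\<forall>x y z. ip x (y + z) = ip x y + ip x z) \<and>
     (\<forall>c x y. ip x (smX c y) = sm c (ip x y)) \<and>
     (\<forall>x y a. ip x (act y a) = ip x y * a) \<and>
     (\<forall>x y. ip x y = st (ip y x)) \<and>
     (\<forall>x. cstar_positive st (ip x x)) \<and>
     (\<forall>x. ip x x = 0 \<longleftrightarrow> x = 0)"

definition mod_abs :: "('a::{real_normed_algebra,banach} \<Rightarrow> 'a) \<Rightarrow> ('x \<Rightarrow> 'x \<Rightarrow> 'a) \<Rightarrow> 'x \<Rightarrow> 'a" where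
  "mod_abs st ip z = cstar_sqrt st (ip z z)"

definition clinear_map ::
  "(complex \<Rightarrow> 'x::ab_group_add \<Rightarrow> 'x) \<Rightarrow> (complex \<Rightarrow> 'y::ab_group_add \<Rightarrow> 'y) \<Rightarrow> ('x \<Rightarrow> 'y) \<Rightarrow> bool" where
  "clinear_map smX smY T \<longleftrightarrow>
     (\<forall>x y. T (x + y) = T x + T y) \<and> (\<forall>c x. T (smX c x) = smY c (T x))"

definition Alinear_map ::
  "(complex \<Rightarrow> 'x::ab_group_add \<Rightarrow> 'x) \<Rightarrow> ('x \<Rightarrow> 'a \<Rightarrow> 'x) \<Rightarrow>
   (complex \<Rightarrow> 'y::ab_group_add \<Rightarrow> 'y) \<Rightarrow> ('y \<Rightarrow> 'a \<Rightarrow> 'y) \<Rightarrow> ('x \<Rightarrow> 'y) \<Rightarrow> bool" where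
  "Alinear_map smX actX smY actY T \<longleftrightarrow>
     clinear_map smX smY T \<and> (\<forall>x a. T (actX x a) = actY (T x) a)"

end

theory Submission
  imports Defs "HOL-Computational_Algebra.Fundamental_Theorem_Algebra"
begin


locale ucstar =
  fixes m :: "'b::banach \<Rightarrow> 'b \<Rightarrow> 'b" (infixl "\<diamond>" 70)
    and e :: 'b
    and cs :: "complex \<Rightarrow> 'b \<Rightarrow> 'b"
    and sr :: "'b \<Rightarrow> 'b"
    and N :: "'b \<Rightarrow> real"
    and ch :: "'b \<Rightarrow> complex"
    and c1 c2 :: real
  assumes m_assoc: "(x \<diamond> y) \<diamond> z = x \<diamond> (y \<diamond> z)"
    and m_distL: "x \<diamond> (y + z) = x \<diamond> y + x \<diamond> z"
    and m_distR: "(x + y) \<diamond> z = x \<diamond> z + y \<diamond> z"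
    and m_e: "x \<diamond> e = x" and e_m: "e \<diamond> x = x"
    and cs_add: "cs c (x + y) = cs c x + cs c y"
    and cs_addc: "cs (c + d) x = cs c x + cs d x"
    and cs_mult: "cs (c * d) x = cs c (cs d x)"
    and cs_one: "cs 1 x = x"
    and cs_real: "cs (of_real r) x = scaleR r x"
    and cs_mL: "cs c x \<diamond> y = cs c (x \<diamond> y)"
    and cs_mR: "x \<diamond> cs c y = cs c (x \<diamond> y)"
    and sr_add: "sr (x + y) = sr x + sr y"
    and sr_cs: "sr (cs c x) = cs (cnj c) (sr x)"
    and sr_m: "sr (x \<diamond> y) = sr y \<diamond> sr x"
    and sr_sr: "sr (sr x) = x"
    and N_tri: "N (x + y) \<le> N x + N y"
    and N_cs: "N (cs c x) = cmod c * N x"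
    and N_m: "N (x \<diamond> y) \<le> N x * N y"
    and N_cstar: "N (sr x \<diamond> x) = (N x)^2"
    and N_e: "N e = 1"
    and c1_pos: "c1 > 0"
    and N_lower: "c1 * norm x \<le> N x"
    and N_upper: "N x \<le> c2 * norm x"
    and ch_add: "ch (x + y) = ch x + ch y"
    and ch_m: "ch (x \<diamond> y) = ch x * ch y"
    and ch_cs: "ch (cs c x) = c * ch x"
    and ch_e: "ch e = 1"
    and ch_bound: "cmod (ch x) \<le> N x"
begin

lemma cs_zero[simp]: "cs 0 x = 0"
  using cs_addc[of 0 0 x] by simp

lemma cs_zero2[simp]: "cs c 0 = 0"
  using cs_add[of c 0 0] by simp

lemma cs_minus: "cs c (- x) = - cs c x"
  using cs_add[of c x "-x"] by (simp add: eq_neg_iff_add_eq_0 add.commute)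

lemma cs_diff: "cs c (x - y) = cs c x - cs c y"
  using cs_add[of c x "-y"] by (simp add: cs_minus)

lemma cs_minusc: "cs (- c) x = - cs c x"
  using cs_addc[of c "-c" x] by (simp add: eq_neg_iff_add_eq_0 add.commute)

lemma cs_diffc: "cs (c - d) x = cs c x - cs d x"
  using cs_addc[of c "-d" x] by (simp add: cs_minusc)

lemma cs_one'[simp]: "cs 1 x = x" by (rule cs_one)

lemma cs_sum: "cs c (sum f A) = (\<Sum>i\<in>A. cs c (f i))"
  by (induction A rule: infinite_finite_induct) (auto simp: cs_add)

lemma cs_sumc: "cs (sum f A) x = (\<Sum>i\<in>A. cs (f i) x)"
  by (induction A rule: infinite_finite_induct) (auto simp: cs_addc)

lemma m_zeroL[simp]: "0 \<diamond> x = 0"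
  using m_distR[of 0 0 x] by simp

lemma m_zeroR[simp]: "x \<diamond> 0 = 0"
  using m_distL[of x 0 0] by simp

lemma m_minusL: "(- x) \<diamond> y = - (x \<diamond> y)"
  using m_distR[of x "-x" y] by (simp add: eq_neg_iff_add_eq_0 add.commute)

lemma m_minusR: "x \<diamond> (- y) = - (x \<diamond> y)"
  using m_distL[of x y "-y"] by (simp add: eq_neg_iff_add_eq_0 add.commute)

lemma m_diffL: "(x - y) \<diamond> z = x \<diamond> z - y \<diamond> z"
  using m_distR[of x "-y" z] by (simp add: m_minusL)

lemma m_diffR: "z \<diamond> (x - y) = z \<diamond> x - z \<diamond> y"
  using m_distL[of z x "-y"] by (simp add: m_minusR)

lemma m_sumL: "sum f A \<diamond> y = (\<Sum>i\<in>A. f i \<diamond> y)"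
  by (induction A rule: infinite_finite_induct) (auto simp: m_distR)

lemma m_sumR: "y \<diamond> sum f A = (\<Sum>i\<in>A. y \<diamond> f i)"
  by (induction A rule: infinite_finite_induct) (auto simp: m_distL)

lemma m_scaleR_L: "(scaleR r x) \<diamond> y = scaleR r (x \<diamond> y)"
  using cs_mL[of "of_real r" x y] by (simp add: cs_real)

lemma m_scaleR_R: "x \<diamond> (scaleR r y) = scaleR r (x \<diamond> y)"
  using cs_mR[of x "of_real r" y] by (simp add: cs_real)

lemma sr_zero[simp]: "sr 0 = 0"
  using sr_add[of 0 0] by simp

lemma sr_minus: "sr (- x) = - sr x"
  using sr_add[of x "-x"] by (simp add: eq_neg_iff_add_eq_0 add.commute)

lemma sr_diff: "sr (x - y) = sr x - sr y"
  using sr_add[of x "-y"] by (simp add: sr_minus)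

lemma sr_e[simp]: "sr e = e"
proof -
  have "sr e = sr e \<diamond> e" by (simp add: m_e)
  also have "\<dots> = sr e \<diamond> sr (sr e)" by (simp add: sr_sr)
  also have "\<dots> = sr (sr e \<diamond> e)" by (simp add: sr_m)
  also have "\<dots> = e" by (simp add: m_e sr_sr)
  finally show ?thesis .
qed

lemma sr_scaleR: "sr (scaleR r x) = scaleR r (sr x)"
  using sr_cs[of "of_real r" x] by (simp add: cs_real)

lemma sr_sum: "sr (sum f A) = (\<Sum>i\<in>A. sr (f i))"
  by (induction A rule: infinite_finite_induct) (auto simp: sr_add)

lemma N_zero[simp]: "N 0 = 0"
  using N_cs[of 0 0] by simp

lemma N_minus: "N (- x) = N x"
  using N_cs[of "-1" x] by (simp add: cs_minusc)

lemma N_nonneg: "N x \<ge> 0"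
  using N_tri[of x "-x"] by (simp add: N_minus)

lemma N_eq0: "N x = 0 \<longleftrightarrow> x = 0"
proof
  assume "N x = 0" then have "c1 * norm x \<le> 0" using N_lower[of x] by simp
  then show "x = 0" using c1_pos by (simp add: mult_le_0_iff)
qed simp

lemma N_diff_commute: "N (x - y) = N (y - x)"
  using N_minus[of "x - y"] by simp

lemma N_tri_diff: "N (x - y) \<le> N x + N y"
  using N_tri[of x "-y"] by (simp add: N_minus)

lemma N_tri3: "N (x - z) \<le> N (x - y) + N (y - z)"
  using N_tri[of "x - y" "y - z"] by simp

lemma N_scaleR: "N (scaleR r x) = \<bar>r\<bar> * N x"
  using N_cs[of "of_real r" x] by (simp add: cs_real)

lemma N_sum: "N (sum f A) \<le> (\<Sum>i\<in>A. N (f i))"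
  by (induction A rule: infinite_finite_induct) (auto intro: order_trans[OF N_tri])

lemma N_rev_tri: "\<bar>N x - N y\<bar> \<le> N (x - y)"
  using N_tri[of "x - y" y] N_tri[of "y - x" x] N_diff_commute[of x y] by auto

lemma c2_pos: "c2 > 0"
proof -
  have "N e \<le> c2 * norm e" by (rule N_upper)
  then have "0 < c2 * norm e" using N_e by simp
  then show ?thesis by (simp add: zero_less_mult_iff)
qed

lemma N_sr: "N (sr x) = N x"
proof -
  have le: "N y \<le> N (sr y)" for y
  proof (cases "N y = 0")
    case False
    have "(N y)^2 = N (sr y \<diamond> y)" by (simp add: N_cstar)
    also have "\<dots> \<le> N (sr y) * N y" by (rule N_m)
    finally have "N y * N y \<le> N (sr y) * N y" by (simp add: power2_eq_square)
    then show ?thesis using False N_nonneg[of y] by auto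
  qed (simp add: N_nonneg)
  show ?thesis using le[of x] le[of "sr x"] by (simp add: sr_sr)
qed

lemma norm_le_N: "norm x \<le> N x / c1"
  using N_lower[of x] c1_pos by (simp add: field_simps)

lemma tendsto_N_iff: "(f \<longlongrightarrow> l) F \<longleftrightarrow> ((\<lambda>n. N (f n - l)) \<longlongrightarrow> 0) F"
proof
  assume "(f \<longlongrightarrow> l) F"
  then have "((\<lambda>n. f n - l) \<longlongrightarrow> 0) F" by (rule LIM_zero)
  then have "((\<lambda>n. norm (f n - l)) \<longlongrightarrow> 0) F" by (rule tendsto_norm_zero)
  then have "((\<lambda>n. c2 * norm (f n - l)) \<longlongrightarrow> 0) F"
    using tendsto_mult_right_zero by blast
  then show "((\<lambda>n. N (f n - l)) \<longlongrightarrow> 0) F"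
    by (rule tendsto_sandwich[rotated 2, OF tendsto_const]) (auto simp: N_nonneg N_upper)
next
  assume "((\<lambda>n. N (f n - l)) \<longlongrightarrow> 0) F"
  then have "((\<lambda>n. N (f n - l) / c1) \<longlongrightarrow> 0) F"
    using tendsto_divide_zero by blast
  then have "((\<lambda>n. norm (f n - l)) \<longlongrightarrow> 0) F"
    by (rule tendsto_sandwich[rotated 2, OF tendsto_const]) (auto simp: norm_le_N)
  then show "(f \<longlongrightarrow> l) F"
    using LIM_zero_cancel tendsto_norm_zero_iff by blast
qed

lemma tendsto_N: "(f \<longlongrightarrow> l) F \<Longrightarrow> ((\<lambda>n. N (f n)) \<longlongrightarrow> N l) F"
proof -
  assume "(f \<longlongrightarrow> l) F"
  then have "((\<lambda>n. N (f n - l)) \<longlongrightarrow> 0) F" by (simp add: tendsto_N_iff)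
  then have "((\<lambda>n. \<bar>N (f n) - N l\<bar>) \<longlongrightarrow> 0) F"
    by (rule tendsto_sandwich[rotated 2, OF tendsto_const]) (auto simp: N_rev_tri)
  then have "((\<lambda>n. N (f n) - N l) \<longlongrightarrow> 0) F" by (simp only: tendsto_rabs_zero_iff)
  then show ?thesis by (rule LIM_zero_cancel)
qed

lemma bounded_linear_mL: "bounded_linear (\<lambda>y. a \<diamond> y)"
proof (rule bounded_linear_intro[where K = "N a * c2 / c1"])
  show "a \<diamond> (x + y) = a \<diamond> x + a \<diamond> y" for x y by (rule m_distL)
  show "a \<diamond> (scaleR r x) = scaleR r (a \<diamond> x)" for r x by (rule m_scaleR_R)
  show "norm (a \<diamond> x) \<le> norm x * (N a * c2 / c1)" for x
  proof -
    have "norm (a \<diamond> x) \<le> N (a \<diamond> x) / c1" by (rule norm_le_N)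
    also have "\<dots> \<le> N a * N x / c1" using N_m c1_pos by (simp add: divide_right_mono)
    also have "\<dots> \<le> N a * (c2 * norm x) / c1"
      using N_upper c1_pos N_nonneg[of a] by (simp add: divide_right_mono mult_left_mono)
    finally show ?thesis by (simp add: algebra_simps)
  qed
qed

lemma bounded_linear_mR: "bounded_linear (\<lambda>y. y \<diamond> a)"
proof (rule bounded_linear_intro[where K = "N a * c2 / c1"])
  show "(x + y) \<diamond> a = x \<diamond> a + y \<diamond> a" for x y by (rule m_distR)
  show "(scaleR r x) \<diamond> a = scaleR r (x \<diamond> a)" for r x by (rule m_scaleR_L)
  show "norm (x \<diamond> a) \<le> norm x * (N a * c2 / c1)" for x
  proof -
    have "norm (x \<diamond> a) \<le> N (x \<diamond> a) / c1" by (rule norm_le_N)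
    also have "\<dots> \<le> N x * N a / c1" using N_m c1_pos by (simp add: divide_right_mono)
    also have "\<dots> \<le> (c2 * norm x) * N a / c1"
      using N_upper c1_pos N_nonneg[of a] by (simp add: divide_right_mono mult_right_mono)
    finally show ?thesis by (simp add: algebra_simps)
  qed
qed

lemma tendsto_mL: "(f \<longlongrightarrow> l) F \<Longrightarrow> ((\<lambda>n. a \<diamond> f n) \<longlongrightarrow> a \<diamond> l) F"
  using bounded_linear.tendsto[OF bounded_linear_mL] by blast

lemma tendsto_mR: "(f \<longlongrightarrow> l) F \<Longrightarrow> ((\<lambda>n. f n \<diamond> a) \<longlongrightarrow> l \<diamond> a) F"
  using bounded_linear.tendsto[OF bounded_linear_mR] by blast

primrec pw :: "'b \<Rightarrow> nat \<Rightarrow> 'b" where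
  "pw x 0 = e"
| "pw x (Suc n) = x \<diamond> pw x n"

lemma pw_add: "pw x (i + j) = pw x i \<diamond> pw x j"
  by (induction i) (auto simp: e_m m_assoc)

lemma pw_1[simp]: "pw x 1 = x" by (simp add: m_e)

lemma pw_Suc2: "pw x (Suc n) = pw x n \<diamond> x"
  using pw_add[of x n 1] by (simp add: m_e)

lemma pw_mult: "pw x (i * j) = pw (pw x i) j"
proof (induction j)
  case (Suc j)
  have "pw x (i * Suc j) = pw x (i + i * j)" by simp
  also have "\<dots> = pw x i \<diamond> pw x (i * j)" by (rule pw_add)
  finally show ?case using Suc by simp
qed simp

lemma N_pw: "N (pw x n) \<le> (N x)^n"
proof (induction n)
  case (Suc n)
  have "N (x \<diamond> pw x n) \<le> N x * N (pw x n)" by (rule N_m)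
  also have "\<dots> \<le> N x * (N x)^n" using Suc N_nonneg[of x] by (simp add: mult_left_mono)
  finally show ?case by simp
qed (simp add: N_e)

lemma comm_pw: "a \<diamond> x = x \<diamond> a \<Longrightarrow> a \<diamond> pw x n = pw x n \<diamond> a"
proof (induction n)
  case 0 then show ?case by (simp add: m_e e_m)
next
  case (Suc n)
  have "a \<diamond> (x \<diamond> pw x n) = (x \<diamond> a) \<diamond> pw x n" using Suc by (simp add: m_assoc[symmetric])
  also have "\<dots> = x \<diamond> (pw x n \<diamond> a)" using Suc by (simp add: m_assoc)
  finally show ?case by (simp add: m_assoc)
qed

lemma sr_pw: "sr (pw x n) = pw (sr x) n"
proof (induction n)
  case (Suc n)
  have "sr (pw x (Suc n)) = sr (pw x n) \<diamond> sr x" by (simp add: sr_m)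
  also have "\<dots> = pw (sr x) n \<diamond> sr x" using Suc by simp
  also have "\<dots> = pw (sr x) (Suc n)" by (rule pw_Suc2[symmetric])
  finally show ?case .
qed simp

lemma pw_cs: "pw (cs c x) n = cs (c^n) (pw x n)"
  by (induction n) (auto simp: cs_mL cs_mR cs_mult[symmetric] mult.commute)

lemma pw_scaleR: "pw (scaleR r x) n = scaleR (r^n) (pw x n)"
  using pw_cs[of "of_real r" x n] by (simp add: cs_real flip: of_real_power)

definition isinv :: "'b \<Rightarrow> 'b \<Rightarrow> bool" where
  "isinv x y \<longleftrightarrow> x \<diamond> y = e \<and> y \<diamond> x = e"

definition invb :: "'b \<Rightarrow> bool" where
  "invb x \<longleftrightarrow> (\<exists>y. isinv x y)"

definition spec :: "'b \<Rightarrow> complex set" where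
  "spec x = {l. \<not> invb (cs l e - x)}"

lemma isinv_unique: "isinv x y \<Longrightarrow> isinv x z \<Longrightarrow> y = z"
  unfolding isinv_def by (metis m_assoc m_e e_m)

lemma isinv_sym: "isinv x y \<Longrightarrow> isinv y x"
  unfolding isinv_def by auto

lemma isinv_e: "isinv e e" unfolding isinv_def by (simp add: m_e)

lemma isinv_m: "isinv x x' \<Longrightarrow> isinv y y' \<Longrightarrow> isinv (x \<diamond> y) (y' \<diamond> x')"
  unfolding isinv_def by (metis m_assoc m_e)

lemma invb_m: "invb x \<Longrightarrow> invb y \<Longrightarrow> invb (x \<diamond> y)"
  unfolding invb_def using isinv_m by blast

lemma isinv_cs: "isinv x y \<Longrightarrow> c \<noteq> 0 \<Longrightarrow> isinv (cs c x) (cs (inverse c) y)"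
  unfolding isinv_def by (simp add: cs_mL cs_mR cs_mult[symmetric])

lemma invb_cs: "invb x \<Longrightarrow> c \<noteq> 0 \<Longrightarrow> invb (cs c x)"
  unfolding invb_def using isinv_cs by blast

lemma invb_cs_iff: "c \<noteq> 0 \<Longrightarrow> invb (cs c x) \<longleftrightarrow> invb x"
  using invb_cs[of "cs c x" "inverse c"] invb_cs[of x c] by (auto simp: cs_mult[symmetric])

lemma isinv_comm: "isinv x y \<Longrightarrow> a \<diamond> x = x \<diamond> a \<Longrightarrow> a \<diamond> y = y \<diamond> a"
  unfolding isinv_def by (metis m_assoc m_e e_m)

lemma invb_comm_factors:
  assumes "x \<diamond> y = y \<diamond> x" "invb (x \<diamond> y)"
  shows "invb x \<and> invb y"
proof -
  obtain z where z: "isinv (x \<diamond> y) z" using assms(2) unfolding invb_def by auto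
  have cz: "x \<diamond> z = z \<diamond> x"
  proof -
    have "x \<diamond> (x \<diamond> y) = (x \<diamond> y) \<diamond> x" by (metis assms(1) m_assoc)
    then show ?thesis using isinv_comm[OF z] by blast
  qed
  have cz2: "y \<diamond> z = z \<diamond> y"
  proof -
    have "y \<diamond> (x \<diamond> y) = (x \<diamond> y) \<diamond> y" by (metis assms(1) m_assoc)
    then show ?thesis using isinv_comm[OF z] by blast
  qed
  have "isinv x (y \<diamond> z)"
    using z cz assms(1) unfolding isinv_def by (metis m_assoc)
  moreover have "isinv y (x \<diamond> z)"
    using z cz2 assms(1) unfolding isinv_def by (metis m_assoc)
  ultimately show ?thesis unfolding invb_def by blast
qed

lemma summable_pw:
  assumes "N x < 1"
  shows "summable (pw x)"
proof (rule summable_comparison_test)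
  show "\<exists>n0. \<forall>n\<ge>n0. norm (pw x n) \<le> (N x)^n / c1"
  proof (intro exI allI impI)
    fix n :: nat
    have "norm (pw x n) \<le> N (pw x n) / c1" by (rule norm_le_N)
    also have "\<dots> \<le> N x ^ n / c1" using N_pw c1_pos by (simp add: divide_right_mono)
    finally show "norm (pw x n) \<le> N x ^ n / c1" .
  qed
  show "summable (\<lambda>n. (N x)^n / c1)"
    using assms N_nonneg[of x] by (auto intro!: summable_divide summable_geometric)
qed

lemma N_suminf:
  assumes "summable f" "summable (\<lambda>n. N (f n))"
  shows "N (suminf f) \<le> (\<Sum>n. N (f n))"
proof -
  have "(\<lambda>k. N (\<Sum>n<k. f n)) \<longlonglongrightarrow> N (suminf f)"
    using tendsto_N[OF summable_LIMSEQ[OF assms(1)]] by simp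
  moreover have "(\<lambda>k. \<Sum>n<k. N (f n)) \<longlonglongrightarrow> (\<Sum>n. N (f n))"
    using summable_LIMSEQ[OF assms(2)] by simp
  ultimately show ?thesis
    by (rule LIMSEQ_le) (auto intro: N_sum)
qed

lemma neumann:
  assumes "N x < 1"
  shows "isinv (e - x) (suminf (pw x))"
    and "N (suminf (pw x) - e) \<le> N x / (1 - N x)"
proof -
  have sm: "summable (pw x)" using summable_pw[OF assms] .
  have lim0: "pw x \<longlonglongrightarrow> 0"
    using summable_LIMSEQ_zero[OF sm] .
  have tel: "(\<lambda>n. pw x n - pw x (Suc n)) sums (e - 0)"
  proof -
    have "(\<lambda>n. pw x (Suc n) - pw x n) sums (0 - pw x 0)"
      by (rule telescope_sums[OF lim0])
    then have "(\<lambda>n. - (pw x (Suc n) - pw x n)) sums (- (0 - pw x 0))"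
      by (rule sums_minus)
    then show ?thesis by simp
  qed
  have "(\<lambda>n. (e - x) \<diamond> pw x n) sums ((e - x) \<diamond> suminf (pw x))"
    using bounded_linear.sums[OF bounded_linear_mL summable_sums[OF sm]] .
  moreover have "(\<lambda>n. (e - x) \<diamond> pw x n) = (\<lambda>n. pw x n - pw x (Suc n))"
    by (auto simp: m_diffL e_m)
  ultimately have 1: "(e - x) \<diamond> suminf (pw x) = e" using tel sums_unique2 by fastforce
  have "(\<lambda>n. pw x n \<diamond> (e - x)) sums (suminf (pw x) \<diamond> (e - x))"
    using bounded_linear.sums[OF bounded_linear_mR summable_sums[OF sm]] .
  moreover have "(\<lambda>n. pw x n \<diamond> (e - x)) = (\<lambda>n. pw x n - pw x (Suc n))"
    using comm_pw[of x x] by (auto simp: m_diffR m_e)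
  ultimately have 2: "suminf (pw x) \<diamond> (e - x) = e" using tel sums_unique2 by fastforce
  show "isinv (e - x) (suminf (pw x))" using 1 2 unfolding isinv_def by simp
  have sm1: "summable (\<lambda>n. pw x (Suc n))" using summable_ignore_initial_segment[OF sm, of 1] by simp
  have "suminf (pw x) - e = (\<Sum>n. pw x (Suc n))"
    using suminf_split_head[OF sm] by simp
  also have "N \<dots> \<le> (\<Sum>n. N x ^ Suc n)"
  proof -
    have g: "summable (\<lambda>n. N x ^ Suc n)"
      using assms N_nonneg[of x] by (simp add: summable_geometric)
    have s2: "summable (\<lambda>n. N (pw x (Suc n)))"
    proof (rule summable_comparison_test[OF _ g], intro exI[of _ 0] allI impI)
      fix n :: nat
      show "norm (N (pw x (Suc n))) \<le> N x ^ Suc n" using N_pw[of x "Suc n"] by (simp add: N_nonneg)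
    qed
    have "N (\<Sum>n. pw x (Suc n)) \<le> (\<Sum>n. N (pw x (Suc n)))" by (rule N_suminf[OF sm1 s2])
    also have "\<dots> \<le> (\<Sum>n. N x ^ Suc n)"
      by (rule suminf_le[OF _ s2 g], rule N_pw)
    finally show ?thesis .
  qed
  also have "(\<Sum>n. N x ^ Suc n) = N x / (1 - N x)"
  proof -
    have "(\<Sum>n. N x ^ Suc n) = N x * (\<Sum>n. N x ^ n)"
      using assms N_nonneg[of x] by (simp add: suminf_mult summable_geometric)
    also have "\<dots> = N x / (1 - N x)"
      using assms N_nonneg[of x] by (simp add: suminf_geometric divide_simps)
    finally show ?thesis .
  qed
  finally show "N (suminf (pw x) - e) \<le> N x / (1 - N x)" .
qed

lemma neumann_invb: "N x < 1 \<Longrightarrow> invb (e - x)"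
  using neumann(1) unfolding invb_def by blast

lemma neumann_inv_bound:
  assumes "N x < 1" "isinv (e - x) y"
  shows "N (y - e) \<le> N x / (1 - N x)"
  using neumann[OF assms(1)] isinv_unique[OF assms(2)] by metis

lemma spec_bound: "l \<in> spec x \<Longrightarrow> cmod l \<le> N x"
proof (rule ccontr)
  assume l: "l \<in> spec x" and "\<not> cmod l \<le> N x"
  then have lt: "N x < cmod l" by simp
  then have l0: "l \<noteq> 0" using N_nonneg[of x] by auto
  have "N (cs (inverse l) x) = N x / cmod l"
    by (simp add: N_cs norm_inverse divide_inverse mult.commute)
  also have "\<dots> < 1" using lt l0 by (auto simp: divide_less_eq)
  finally have "N (cs (inverse l) x) < 1" .
  then have "invb (e - cs (inverse l) x)" by (rule neumann_invb)
  then have "invb (cs l (e - cs (inverse l) x))" using l0 by (simp add: invb_cs)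
  moreover have "cs l (e - cs (inverse l) x) = cs l e - x"
    using l0 by (simp add: cs_diff cs_mult[symmetric])
  ultimately show False using l unfolding spec_def by simp
qed

lemma perturb:
  assumes "isinv x y" "N d * N y < 1"
  shows "\<exists>y'. isinv (x + d) y' \<and> N (y' - y) \<le> N y * (N y * N d / (1 - N y * N d))"
proof -
  define w where "w = - (y \<diamond> d)"
  have Nw: "N w \<le> N y * N d" unfolding w_def by (simp add: N_minus N_m)
  have Nw1: "N w < 1" using Nw assms(2) by (simp add: mult.commute)
  obtain s where s: "isinv (e - w) s" using neumann(1)[OF Nw1] by blast
  have bs: "N (s - e) \<le> N w / (1 - N w)" by (rule neumann_inv_bound[OF Nw1 s])
  have xd: "x + d = x \<diamond> (e - w)"
    using assms(1) unfolding w_def isinv_def by (simp add: m_distL m_e e_m m_assoc[symmetric])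
  have inv: "isinv (x + d) (s \<diamond> y)"
    unfolding xd using isinv_m[OF assms(1) s] .
  have "N (s \<diamond> y - y) = N ((s - e) \<diamond> y)" by (simp add: m_diffL e_m)
  also have "\<dots> \<le> N (s - e) * N y" by (rule N_m)
  also have "\<dots> \<le> (N w / (1 - N w)) * N y"
    using mult_right_mono[OF bs N_nonneg[of y]] .
  also have "\<dots> \<le> (N y * N d / (1 - N y * N d)) * N y"
  proof -
    have "N w / (1 - N w) \<le> N y * N d / (1 - N y * N d)"
      using Nw Nw1 N_nonneg[of w] assms(2) by (simp add: frac_le mult.commute)
    then show ?thesis by (rule mult_right_mono[OF _ N_nonneg])
  qed
  finally show ?thesis using inv by (auto simp: mult.commute)
qed

end


context ucstar
begin

definition inv_of :: "'b \<Rightarrow> 'b" where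
  "inv_of y = (SOME z. isinv y z)"

lemma inv_of: "invb y \<Longrightarrow> isinv y (inv_of y)"
  unfolding invb_def inv_of_def by (rule someI_ex)

lemma inv_of_eq: "isinv y z \<Longrightarrow> inv_of y = z"
  using inv_of isinv_unique invb_def by blast

definition sa :: "'b \<Rightarrow> bool" where
  "sa x \<longleftrightarrow> sr x = x"

lemma e_ne_0: "e \<noteq> 0"
  using N_e by auto

lemma not_invb_0: "\<not> invb 0"
  unfolding invb_def isinv_def using e_ne_0 by auto

lemma invb_e: "invb e" using isinv_e invb_def by blast

lemma resolvent_diff:
  assumes "isinv (e - cs a x) u" "isinv (e - cs b x) v"
  shows "u - v = cs (a - b) (u \<diamond> x \<diamond> v)"
proof -
  have "u \<diamond> ((e - cs b x) - (e - cs a x)) \<diamond> v =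
        u \<diamond> ((e - cs b x) \<diamond> v) - (u \<diamond> (e - cs a x)) \<diamond> v"
    by (simp add: m_diffL m_diffR m_assoc)
  also have "\<dots> = u - v" using assms unfolding isinv_def by (simp add: m_e e_m)
  finally have "u - v = u \<diamond> ((e - cs b x) - (e - cs a x)) \<diamond> v" by simp
  also have "(e - cs b x) - (e - cs a x) = cs (a - b) x" by (simp add: cs_diffc)
  finally show ?thesis by (simp add: cs_mL cs_mR)
qed

lemma resolvent_cont:
  assumes H: "\<And>\<nu>. cmod \<nu> \<le> 1 \<Longrightarrow> invb (e - cs \<nu> x)"
  shows "continuous_on (cball 0 1) (\<lambda>\<nu>. inv_of (e - cs \<nu> x))"
proof (clarsimp simp: continuous_on_def)
  fix \<nu>0 :: complex assume n0: "cmod \<nu>0 \<le> 1"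
  define y0 where "y0 = inv_of (e - cs \<nu>0 x)"
  have y0: "isinv (e - cs \<nu>0 x) y0" unfolding y0_def using H[OF n0] inv_of by blast
  define F where "F = (\<lambda>t. N y0 * (N y0 * (t * N x) / (1 - N y0 * (t * N x))))"
  have F0: "(F \<longlongrightarrow> 0) (at 0)"
  proof -
    have "((\<lambda>t. N y0 * (N y0 * (t * N x) / (1 - N y0 * (t * N x)))) \<longlongrightarrow>
           N y0 * (N y0 * (0 * N x) / (1 - N y0 * (0 * N x)))) (at 0)"
      by (intro tendsto_intros) auto
    then show ?thesis unfolding F_def by simp
  qed
  have "((\<lambda>\<nu>. N (inv_of (e - cs \<nu> x) - y0)) \<longlongrightarrow> 0) (at \<nu>0 within cball 0 1)"
  proof (rule tendsto_sandwich[where f = "\<lambda>_. 0" and h = "\<lambda>\<nu>. F (cmod (\<nu> - \<nu>0))"])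
    show "\<forall>\<^sub>F \<nu> in at \<nu>0 within cball 0 1. 0 \<le> N (inv_of (e - cs \<nu> x) - y0)"
      by (simp add: N_nonneg)
    have ev: "\<forall>\<^sub>F \<nu> in at \<nu>0 within cball 0 1. N y0 * (cmod (\<nu> - \<nu>0) * N x) < 1"
    proof -
      have "((\<lambda>\<nu>. N y0 * (cmod (\<nu> - \<nu>0) * N x)) \<longlongrightarrow> N y0 * (cmod (\<nu>0 - \<nu>0) * N x))
             (at \<nu>0 within cball 0 1)"
        by (intro tendsto_intros)
      then have "((\<lambda>\<nu>. N y0 * (cmod (\<nu> - \<nu>0) * N x)) \<longlongrightarrow> 0) (at \<nu>0 within cball 0 1)"
        by simp
      then show ?thesis by (rule order_tendstoD) simp
    qed
    show "\<forall>\<^sub>F \<nu> in at \<nu>0 within cball 0 1. N (inv_of (e - cs \<nu> x) - y0) \<le> F (cmod (\<nu> - \<nu>0))"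
    proof -
      have inS: "\<forall>\<^sub>F \<nu> in at \<nu>0 within cball 0 1. \<nu> \<in> cball 0 1"
        by (simp add: eventually_at_filter)
      show ?thesis
    proof (rule eventually_mono[OF eventually_conj[OF ev inS]])
      fix \<nu> assume a: "N y0 * (cmod (\<nu> - \<nu>0) * N x) < 1 \<and> \<nu> \<in> cball 0 1"
      define d where "d = cs (\<nu>0 - \<nu>) x"
      have Nd: "N d = cmod (\<nu> - \<nu>0) * N x"
        unfolding d_def by (simp add: N_cs norm_minus_commute)
      have "N d * N y0 < 1" using a Nd by (simp add: mult.commute)
      from perturb[OF y0 this] obtain y' where
        y': "isinv (e - cs \<nu>0 x + d) y'" "N (y' - y0) \<le> N y0 * (N y0 * N d / (1 - N y0 * N d))"
        by blast
      have "e - cs \<nu>0 x + d = e - cs \<nu> x" unfolding d_def by (simp add: cs_diffc)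
      then have "isinv (e - cs \<nu> x) y'" using y'(1) by metis
      then have "inv_of (e - cs \<nu> x) = y'" by (rule inv_of_eq)
      then show "N (inv_of (e - cs \<nu> x) - y0) \<le> F (cmod (\<nu> - \<nu>0))"
        using y'(2) Nd unfolding F_def by simp
    qed
    qed
    have "((\<lambda>\<nu>. cmod (\<nu> - \<nu>0)) \<longlongrightarrow> 0) (at \<nu>0 within cball 0 1)"
    proof -
      have "((\<lambda>\<nu>. cmod (\<nu> - \<nu>0)) \<longlongrightarrow> cmod (\<nu>0 - \<nu>0)) (at \<nu>0 within cball 0 1)"
        by (intro tendsto_intros)
      then show ?thesis by simp
    qed
    moreover have "\<forall>\<^sub>F \<nu> in at \<nu>0 within cball 0 1. cmod (\<nu> - \<nu>0) \<noteq> 0"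
      by (simp add: eventually_at_filter)
    ultimately have "filterlim (\<lambda>\<nu>. cmod (\<nu> - \<nu>0)) (at 0) (at \<nu>0 within cball 0 1)"
      by (simp add: filterlim_at)
    then show "((\<lambda>\<nu>. F (cmod (\<nu> - \<nu>0))) \<longlongrightarrow> 0) (at \<nu>0 within cball 0 1)"
      using F0 filterlim_compose by blast
  qed simp
  then show "((\<lambda>\<nu>. inv_of (e - cs \<nu> x)) \<longlongrightarrow> inv_of (e - cs \<nu>0 x)) (at \<nu>0 within cball 0 1)"
    unfolding y0_def by (simp add: tendsto_N_iff)
qed

lemma resolvent_bounded:
  assumes H: "\<And>\<nu>. cmod \<nu> \<le> 1 \<Longrightarrow> invb (e - cs \<nu> x)"
  shows "\<exists>K. \<forall>\<nu>. cmod \<nu> \<le> 1 \<longrightarrow> N (inv_of (e - cs \<nu> x)) \<le> K"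
proof -
  have "compact ((\<lambda>\<nu>. inv_of (e - cs \<nu> x)) ` cball 0 1)"
    by (rule compact_continuous_image[OF resolvent_cont[OF H] compact_cball])
  then obtain R where R: "\<forall>y\<in>(\<lambda>\<nu>. inv_of (e - cs \<nu> x)) ` cball 0 1. norm y \<le> R"
    using compact_imp_bounded bounded_iff by blast
  show ?thesis
  proof (intro exI allI impI)
    fix \<nu> :: complex assume "cmod \<nu> \<le> 1"
    then have "norm (inv_of (e - cs \<nu> x)) \<le> R" using R by auto
    then show "N (inv_of (e - cs \<nu> x)) \<le> c2 * R"
      using N_upper c2_pos by (meson mult_left_mono less_imp_le order_trans)
  qed
qed

text \<open>Rickart's elementary argument\<close>

definition Pk :: "'b \<Rightarrow> nat \<Rightarrow> 'b" where
  "Pk x k = pw x (2^k)"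

definition Yk :: "'b \<Rightarrow> nat \<Rightarrow> complex \<Rightarrow> 'b" where
  "Yk x k \<nu> = cs (\<nu>^(2^k)) (Pk x k)"

lemma Pk_Suc: "Pk x (Suc k) = Pk x k \<diamond> Pk x k"
  unfolding Pk_def by (simp add: pw_add[symmetric] mult_2)

lemma Yk_Suc: "Yk x (Suc k) \<nu> = Yk x k \<nu> \<diamond> Yk x k \<nu>"
  unfolding Yk_def Pk_Suc by (simp add: cs_mL cs_mR cs_mult[symmetric] power_add[symmetric] mult_2)

lemma Yk_0: "Yk x 0 \<nu> = cs \<nu> x"
  unfolding Yk_def Pk_def by (simp add: m_e)

lemma zeta_pow: "(cis (pi / 2^k)) ^ (2^k) = -1"
  by (subst Complex.DeMoivre) simp

lemma Yk_rot: "Yk x k (cis (pi / 2^k) * \<nu>) = - Yk x k \<nu>"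
  unfolding Yk_def by (simp add: power_mult_distrib zeta_pow cs_minusc)

lemma rickart_step:
  assumes H: "\<And>\<nu>. cmod \<nu> \<le> 1 \<Longrightarrow> invb (e - cs \<nu> x)"
    and L: "\<And>\<nu> \<nu>'. cmod \<nu> \<le> 1 \<Longrightarrow> cmod \<nu>' \<le> 1 \<Longrightarrow>
              N (inv_of (e - cs \<nu> x) - inv_of (e - cs \<nu>' x)) \<le> L * cmod (\<nu> - \<nu>')"
  shows "(\<forall>\<nu>. cmod \<nu> \<le> 1 \<longrightarrow> invb (e - Yk x k \<nu>)) \<and>
         (\<forall>\<nu> \<nu>'. cmod \<nu> \<le> 1 \<longrightarrow> cmod \<nu>' \<le> 1 \<longrightarrow>
            N (inv_of (e - Yk x k \<nu>) - inv_of (e - Yk x k \<nu>')) \<le> L * cmod (\<nu> - \<nu>'))"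
proof (induction k)
  case 0 then show ?case using H L by (simp add: Yk_0)
next
  case (Suc k)
  define z where "z = cis (pi / 2^k)"
  have z1: "cmod z = 1" unfolding z_def by simp
  have key: "isinv (e - Yk x (Suc k) \<nu>)
              (scaleR (1/2) (inv_of (e - Yk x k \<nu>) + inv_of (e - Yk x k (z * \<nu>))))"
    if nu: "cmod \<nu> \<le> 1" for \<nu>
  proof -
    define Y where "Y = Yk x k \<nu>"
    have zn: "cmod (z * \<nu>) \<le> 1" using nu z1 by (simp add: norm_mult)
    have A: "isinv (e - Y) (inv_of (e - Y))" using Suc nu inv_of unfolding Y_def by blast
    have "isinv (e - Yk x k (z * \<nu>)) (inv_of (e - Yk x k (z * \<nu>)))"
      using Suc zn inv_of by blast
    then have B: "isinv (e + Y) (inv_of (e + Y))"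
      unfolding z_def Yk_rot Y_def by simp
    define a where "a = inv_of (e - Y)"
    define b where "b = inv_of (e + Y)"
    have prod1: "(e - Y) \<diamond> (e + Y) = e - Y \<diamond> Y"
      by (simp add: m_distL m_diffL m_e e_m)
    have prod2: "(e + Y) \<diamond> (e - Y) = e - Y \<diamond> Y"
      by (simp add: m_distR m_diffR m_e e_m)
    have aE: "a \<diamond> (e - Y) = e" "(e - Y) \<diamond> a = e" using A unfolding a_def isinv_def by auto
    have bE: "b \<diamond> (e + Y) = e" "(e + Y) \<diamond> b = e" using B unfolding b_def isinv_def by auto
    have 1: "(a + b) \<diamond> (e - Y \<diamond> Y) = scaleR 2 e"
    proof -
      have "a \<diamond> (e - Y \<diamond> Y) = e + Y"
        unfolding prod1[symmetric] by (simp add: m_assoc[symmetric] aE e_m)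
      moreover have "b \<diamond> (e - Y \<diamond> Y) = e - Y"
        unfolding prod2[symmetric] by (simp add: m_assoc[symmetric] bE e_m)
      ultimately show ?thesis by (simp add: m_distR scaleR_2)
    qed
    have 2: "(e - Y \<diamond> Y) \<diamond> (a + b) = scaleR 2 e"
    proof -
      have "(e - Y \<diamond> Y) \<diamond> a = e + Y"
        unfolding prod2[symmetric] by (simp add: m_assoc aE m_e)
      moreover have "(e - Y \<diamond> Y) \<diamond> b = e - Y"
        unfolding prod1[symmetric] by (simp add: m_assoc bE m_e)
      ultimately show ?thesis by (simp add: m_distL scaleR_2)
    qed
    have "Yk x (Suc k) \<nu> = Y \<diamond> Y" unfolding Y_def by (rule Yk_Suc)
    moreover have "inv_of (e - Yk x k (z * \<nu>)) = b"
      unfolding b_def z_def Yk_rot Y_def by simp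
    ultimately show ?thesis
      using 1 2 unfolding isinv_def a_def Y_def
      by (simp add: m_scaleR_L m_scaleR_R)
  qed
  have inv_eq: "inv_of (e - Yk x (Suc k) \<nu>) =
        scaleR (1/2) (inv_of (e - Yk x k \<nu>) + inv_of (e - Yk x k (z * \<nu>)))"
    if "cmod \<nu> \<le> 1" for \<nu>
    using key[OF that] inv_of_eq by blast
  show ?case
  proof (intro conjI allI impI)
    fix \<nu> :: complex assume "cmod \<nu> \<le> 1"
    then show "invb (e - Yk x (Suc k) \<nu>)" using key invb_def by blast
  next
    fix \<nu> \<nu>' :: complex assume nu: "cmod \<nu> \<le> 1" and nu': "cmod \<nu>' \<le> 1"
    have zn: "cmod (z * \<nu>) \<le> 1" "cmod (z * \<nu>') \<le> 1" using nu nu' z1 by (auto simp: norm_mult)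
    have "inv_of (e - Yk x (Suc k) \<nu>) - inv_of (e - Yk x (Suc k) \<nu>') =
          scaleR (1/2) ((inv_of (e - Yk x k \<nu>) - inv_of (e - Yk x k \<nu>')) +
                        (inv_of (e - Yk x k (z * \<nu>)) - inv_of (e - Yk x k (z * \<nu>'))))"
      using inv_eq[OF nu] inv_eq[OF nu'] by (simp add: algebra_simps)
    then have "N (inv_of (e - Yk x (Suc k) \<nu>) - inv_of (e - Yk x (Suc k) \<nu>')) \<le>
          (1/2) * (N (inv_of (e - Yk x k \<nu>) - inv_of (e - Yk x k \<nu>')) +
                   N (inv_of (e - Yk x k (z * \<nu>)) - inv_of (e - Yk x k (z * \<nu>'))))"
      using N_tri by (simp add: N_scaleR)
    also have "\<dots> \<le> (1/2) * (L * cmod (\<nu> - \<nu>') + L * cmod (z * \<nu> - z * \<nu>'))"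
      using Suc nu nu' zn by (intro mult_left_mono add_mono) auto
    also have "cmod (z * \<nu> - z * \<nu>') = cmod (\<nu> - \<nu>')"
      using z1 by (simp add: right_diff_distrib[symmetric] norm_mult)
    finally show "N (inv_of (e - Yk x (Suc k) \<nu>) - inv_of (e - Yk x (Suc k) \<nu>')) \<le> L * cmod (\<nu> - \<nu>')"
      by simp
  qed
qed


lemma resolvent_lip:
  assumes H: "\<And>\<nu>. cmod \<nu> \<le> 1 \<Longrightarrow> invb (e - cs \<nu> x)"
  shows "\<exists>L. \<forall>\<nu> \<nu>'. cmod \<nu> \<le> 1 \<longrightarrow> cmod \<nu>' \<le> 1 \<longrightarrow>
              N (inv_of (e - cs \<nu> x) - inv_of (e - cs \<nu>' x)) \<le> L * cmod (\<nu> - \<nu>')"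
proof -
  obtain K where K: "\<And>\<nu>. cmod \<nu> \<le> 1 \<Longrightarrow> N (inv_of (e - cs \<nu> x)) \<le> K"
    using resolvent_bounded[OF H] by blast
  have k: "N (inv_of (e - cs 0 x)) \<le> K" by (rule K) simp
  have K0: "0 \<le> K" by (rule order_trans[OF N_nonneg k])
  show ?thesis
  proof (intro exI allI impI)
    fix \<nu> \<nu>' :: complex assume a: "cmod \<nu> \<le> 1" "cmod \<nu>' \<le> 1"
    define u where "u = inv_of (e - cs \<nu> x)"
    define v where "v = inv_of (e - cs \<nu>' x)"
    have u: "isinv (e - cs \<nu> x) u" unfolding u_def using H[OF a(1)] inv_of by blast
    have v: "isinv (e - cs \<nu>' x) v" unfolding v_def using H[OF a(2)] inv_of by blast
    have eq: "N (u - v) = cmod (\<nu> - \<nu>') * N (u \<diamond> x \<diamond> v)"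
      using resolvent_diff[OF u v] by (simp add: N_cs)
    have le: "N (u \<diamond> x \<diamond> v) \<le> K * N x * K"
    proof -
      have "N (u \<diamond> x \<diamond> v) \<le> N (u \<diamond> x) * N v" by (rule N_m)
      also have "\<dots> \<le> (N u * N x) * N v" by (intro mult_right_mono N_m N_nonneg)
      also have "\<dots> \<le> (K * N x) * K"
        using K[OF a(1)] K[OF a(2)] K0 unfolding u_def v_def
        by (intro mult_mono N_nonneg mult_nonneg_nonneg) (auto simp: N_nonneg)
      finally show ?thesis .
    qed
    have "N (u - v) \<le> cmod (\<nu> - \<nu>') * (K * N x * K)"
      unfolding eq by (rule mult_left_mono[OF le]) simp
    then show "N (inv_of (e - cs \<nu> x) - inv_of (e - cs \<nu>' x)) \<le> (K * N x * K) * cmod (\<nu> - \<nu>')"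
      unfolding u_def v_def by (simp add: mult.commute)
  qed
qed

lemma frac_bound: "0 \<le> (t::real) \<Longrightarrow> t \<le> a \<Longrightarrow> a < 1 \<Longrightarrow> t / (1 - t) \<le> a / (1 - a)"
  by (rule frac_le) auto

lemma rickart:
  assumes H: "\<And>\<nu>. cmod \<nu> \<le> 1 \<Longrightarrow> invb (e - cs \<nu> x)"
  shows "\<exists>k0. \<forall>k\<ge>k0. N (Pk x k) \<le> 1"
proof -
  obtain L where L: "\<And>\<nu> \<nu>'. cmod \<nu> \<le> 1 \<Longrightarrow> cmod \<nu>' \<le> 1 \<Longrightarrow>
              N (inv_of (e - cs \<nu> x) - inv_of (e - cs \<nu>' x)) \<le> L * cmod (\<nu> - \<nu>')"
    using resolvent_lip[OF H] by blast
  have L0: "0 \<le> L" using L[of 1 0] N_nonneg[of "inv_of (e - cs 1 x) - inv_of (e - cs 0 x)"] by simp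
  note step = rickart_step[OF H L]
  define \<delta> where "\<delta> = 1 / (4 * (L + 1))"
  have d0: "0 < \<delta>" unfolding \<delta>_def using L0 by simp
  have Ld: "L * \<delta> \<le> 1/4" unfolding \<delta>_def using L0 by (simp add: field_simps)
  define Bd where "Bd = (\<lambda>\<rho>::real. \<exists>k0. \<forall>k\<ge>k0. \<rho>^(2^k) * N (Pk x k) \<le> 1)"
  define G where "G = (\<lambda>\<rho>::real. (\<lambda>k. \<rho>^(2^k) * N (Pk x k)) \<longlonglongrightarrow> 0)"
  have NY: "N (Yk x k (of_real \<rho>)) = \<rho>^(2^k) * N (Pk x k)" if "0 \<le> \<rho>" for \<rho> k
    unfolding Yk_def using that by (simp add: N_cs norm_power)
  have lemA: "G \<rho>1" if r: "0 \<le> \<rho>1" "\<rho>1 < \<rho>2" and B: "Bd \<rho>2" for \<rho>1 \<rho>2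
  proof -
    define q where "q = \<rho>1 / \<rho>2"
    have q: "0 \<le> q" "q < 1" using r unfolding q_def by auto
    obtain k0 where k0: "\<And>k. k \<ge> k0 \<Longrightarrow> \<rho>2^(2^k) * N (Pk x k) \<le> 1" using B unfolding Bd_def by blast
    have ql: "(\<lambda>k. q^k) \<longlonglongrightarrow> 0" using q by (simp add: LIMSEQ_power_zero)
    have evle: "\<forall>\<^sub>F k in sequentially. \<rho>1^(2^k) * N (Pk x k) \<le> q^k"
    proof (rule eventually_sequentiallyI[of k0])
      fix k assume "k0 \<le> k"
      have "\<rho>1^(2^k) = q^(2^k) * \<rho>2^(2^k)" using r unfolding q_def by (simp add: power_divide)
      then have "\<rho>1^(2^k) * N (Pk x k) = q^(2^k) * (\<rho>2^(2^k) * N (Pk x k))" by simp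
      also have "\<dots> \<le> q^(2^k) * 1" using k0[OF \<open>k0 \<le> k\<close>] q by (intro mult_left_mono) auto
      also have "\<dots> \<le> q^k" using q by (simp add: power_decreasing less_imp_le)
      finally show "\<rho>1^(2^k) * N (Pk x k) \<le> q^k" .
    qed
    have ev0: "\<forall>\<^sub>F k in sequentially. 0 \<le> \<rho>1^(2^k) * N (Pk x k)"
      using r by (simp add: N_nonneg)
    show ?thesis unfolding G_def
      by (rule tendsto_sandwich[OF ev0 evle tendsto_const ql])
  qed
  have lemB: "Bd \<rho>'" if r: "0 \<le> \<rho>" "\<rho> \<le> 1" "0 \<le> \<rho>'" "\<rho>' \<le> 1" "\<bar>\<rho> - \<rho>'\<bar> \<le> \<delta>" and g: "G \<rho>"
    for \<rho> \<rho>'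
  proof -
    have "\<forall>\<^sub>F k in sequentially. \<rho>^(2^k) * N (Pk x k) < 1/5"
      using g unfolding G_def by (rule order_tendstoD) simp
    then obtain k0 where k0: "\<And>k. k \<ge> k0 \<Longrightarrow> \<rho>^(2^k) * N (Pk x k) < 1/5"
      by (auto simp: eventually_sequentially)
    show ?thesis unfolding Bd_def
    proof (intro exI allI impI)
      fix k assume "k0 \<le> k"
      define Y where "Y = Yk x k (of_real \<rho>)"
      define Y' where "Y' = Yk x k (of_real \<rho>')"
      have NYl: "N Y < 1/5" using k0[OF \<open>k0 \<le> k\<close>] NY[OF r(1)] unfolding Y_def by simp
      have nr: "cmod (of_real \<rho>) \<le> 1" "cmod (of_real \<rho>') \<le> 1" using r by auto
      have iY: "isinv (e - Y) (inv_of (e - Y))" using step nr inv_of unfolding Y_def by blast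
      have iY': "isinv (e - Y') (inv_of (e - Y'))" using step nr inv_of unfolding Y'_def by blast
      have b1: "N (inv_of (e - Y) - e) \<le> 1/4"
      proof -
        have "N (inv_of (e - Y) - e) \<le> N Y / (1 - N Y)"
          using NYl by (intro neumann_inv_bound[OF _ iY]) auto
        also have "\<dots> \<le> (1/5) / (1 - 1/5)"
          using NYl N_nonneg[of Y] by (intro frac_bound) auto
        finally show ?thesis by simp
      qed
      have b2: "N (inv_of (e - Y') - inv_of (e - Y)) \<le> 1/4"
      proof -
        have "N (inv_of (e - Y') - inv_of (e - Y)) \<le> L * cmod (of_real \<rho>' - of_real \<rho>)"
          using step nr unfolding Y_def Y'_def by blast
        also have "\<dots> \<le> L * \<delta>" using r L0 by (intro mult_left_mono) (auto simp: abs_minus_commute simp flip: of_real_diff)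
        finally show ?thesis using Ld by simp
      qed
      define E where "E = e - inv_of (e - Y')"
      have NE: "N E \<le> 1/2"
      proof -
        have "N E = N (inv_of (e - Y') - e)" unfolding E_def by (simp add: N_diff_commute)
        also have "\<dots> \<le> N (inv_of (e - Y') - inv_of (e - Y)) + N (inv_of (e - Y) - e)" by (rule N_tri3)
        finally show ?thesis using b1 b2 by simp
      qed
      have NE1: "N E < 1" using NE by simp
      have "isinv (e - E) (e - Y')" unfolding E_def using isinv_sym[OF iY'] by simp
      then have "N ((e - Y') - e) \<le> N E / (1 - N E)" by (rule neumann_inv_bound[OF NE1])
      also have "\<dots> \<le> (1/2) / (1 - 1/2)" using NE N_nonneg[of E] by (intro frac_bound) auto
      finally have "N Y' \<le> 1" by (simp add: N_minus)
      then show "\<rho>'^(2^k) * N (Pk x k) \<le> 1" using NY[OF r(3)] unfolding Y'_def by simp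
    qed
  qed
  have G0: "G 0"
  proof -
    have "(\<lambda>k. (0::real)^(2^k) * N (Pk x k)) = (\<lambda>k. 0)" by (rule ext) (simp add: zero_power)
    then show ?thesis unfolding G_def by simp
  qed
  have ind: "\<forall>\<rho>'. 0 \<le> \<rho>' \<and> \<rho>' \<le> 1 \<and> \<rho>' \<le> real m * (\<delta>/2) \<longrightarrow> Bd \<rho>'" for m :: nat
  proof (induction m)
    case 0
    show ?case
    proof (intro allI impI)
      fix \<rho>' :: real assume "0 \<le> \<rho>' \<and> \<rho>' \<le> 1 \<and> \<rho>' \<le> real 0 * (\<delta> / 2)"
      then have "\<rho>' = 0" by simp
      then show "Bd \<rho>'" unfolding Bd_def by (auto simp: zero_power)
    qed
  next
    case (Suc m)
    show ?case
    proof (intro allI impI)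
      fix \<rho>' :: real assume a: "0 \<le> \<rho>' \<and> \<rho>' \<le> 1 \<and> \<rho>' \<le> real (Suc m) * (\<delta> / 2)"
      show "Bd \<rho>'"
      proof (cases "\<rho>' \<le> real m * (\<delta>/2)")
        case True then show ?thesis using Suc a by blast
      next
        case False
        define \<rho>2 where "\<rho>2 = real m * (\<delta>/2)"
        define \<rho>1 where "\<rho>1 = max 0 (\<rho>2 - \<delta>/2)"
        have r2: "0 \<le> \<rho>2" "\<rho>2 < \<rho>'" unfolding \<rho>2_def using False d0 by auto
        have r1: "0 \<le> \<rho>1" "\<rho>1 \<le> \<rho>2" unfolding \<rho>1_def using r2 d0 by auto
        have G1: "G \<rho>1"
        proof (cases "\<rho>1 = 0")
          case True then show ?thesis using G0 by simp
        next
          case False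
          then have "\<rho>1 < \<rho>2" unfolding \<rho>1_def using d0 by auto
          moreover have "Bd \<rho>2"
          proof -
            have "0 \<le> \<rho>2 \<and> \<rho>2 \<le> 1 \<and> \<rho>2 \<le> real m * (\<delta>/2)"
              using r2 a unfolding \<rho>2_def by linarith
            then show ?thesis using Suc.IH by blast
          qed
          ultimately show ?thesis using lemA r1 by blast
        qed
        have "\<rho>' \<le> \<rho>2 + \<delta>/2" using a unfolding \<rho>2_def by (simp add: algebra_simps)
        then have "\<bar>\<rho>1 - \<rho>'\<bar> \<le> \<delta>" unfolding \<rho>1_def using r2 d0 by auto
        then show ?thesis using lemB[OF r1(1) _ _ _ _ G1] r1 r2 a by auto
      qed
    qed
  qed
  obtain m :: nat where m: "2 / \<delta> < real m" using reals_Archimedean2 by blast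
  have "1 \<le> real m * (\<delta>/2)" using m d0 by (simp add: field_simps)
  then have "Bd 1" using ind[of m] by auto
  then show ?thesis unfolding Bd_def by simp
qed

lemma N_pw_sa:
  assumes "sa h"
  shows "N (Pk h k) = (N h)^(2^k)"
proof (induction k)
  case 0 then show ?case by (simp add: Pk_def m_e)
next
  case (Suc k)
  have "sr (Pk h k) = Pk h k" using assms unfolding sa_def Pk_def by (simp add: sr_pw)
  then have "N (Pk h (Suc k)) = N (Pk h k)^2" using N_cstar[of "Pk h k"] by (simp add: Pk_Suc)
  then show ?case using Suc by (simp add: power_mult[symmetric] mult.commute)
qed

lemma sa_spec_real:
  assumes "sa h" "l \<in> spec h"
  shows "Im l = 0"
proof (rule ccontr)
  assume b: "Im l \<noteq> 0"
  define M where "M = N h"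
  have bound: "(Re l)^2 + (Im l + t)^2 \<le> M^2 + t^2" for t :: real
  proof -
    define w where "w = h + cs (\<i> * of_real t) e"
    have "l + \<i> * of_real t \<in> spec w"
      using assms(2) unfolding spec_def w_def by (simp add: cs_addc algebra_simps)
    then have "cmod (l + \<i> * of_real t) \<le> N w" by (rule spec_bound)
    then have "(cmod (l + \<i> * of_real t))^2 \<le> (N w)^2"
      by (simp add: power_mono)
    also have "(N w)^2 = N (sr w \<diamond> w)" by (simp add: N_cstar)
    also have "sr w \<diamond> w = h \<diamond> h + cs (of_real (t^2)) e"
    proof -
      have srw: "sr w = h - cs (\<i> * of_real t) e"
        using assms(1) unfolding w_def sa_def by (simp add: sr_add sr_cs cs_minusc)
      have "sr w \<diamond> w = h \<diamond> h + cs (\<i> * of_real t) h - cs (\<i> * of_real t) h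
                  - cs (\<i> * of_real t) (cs (\<i> * of_real t) e)"
        unfolding srw unfolding w_def by (simp add: m_distL m_diffL cs_mL cs_mR m_e e_m cs_diff algebra_simps)
      also have "\<dots> = h \<diamond> h + cs (of_real (t^2)) e"
      proof -
        have c: "- (\<i> * complex_of_real t * (\<i> * complex_of_real t)) = complex_of_real (t^2)"
          by (simp add: algebra_simps power2_eq_square)
        show ?thesis by (simp add: cs_mult[symmetric] cs_minusc[symmetric] c)
      qed
      finally show ?thesis .
    qed
    also have "N (h \<diamond> h + cs (of_real (t^2)) e) \<le> M^2 + t^2"
    proof -
      have "N (h \<diamond> h + cs (of_real (t^2)) e) \<le> N (h \<diamond> h) + N (cs (of_real (t^2)) e)" by (rule N_tri)
      also have "N (h \<diamond> h) \<le> M^2" unfolding M_def using N_m[of h h] by (simp add: power2_eq_square)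
      also have "N (cs (of_real (t^2)) e) = t^2" by (simp add: N_cs N_e del: of_real_power)
      finally show ?thesis by simp
    qed
    finally show ?thesis by (simp add: cmod_power2 algebra_simps)
  qed
  define t where "t = (M^2 + 1) / (2 * Im l)"
  have "(Re l)^2 + (Im l + t)^2 \<le> M^2 + t^2" by (rule bound)
  then have "(Re l)^2 + (Im l)^2 + 2 * Im l * t \<le> M^2" by (simp add: power2_eq_square algebra_simps)
  moreover have "2 * Im l * t = M^2 + 1" unfolding t_def using b by simp
  ultimately show False by (smt (verit) zero_le_power2)
qed

end


context ucstar
begin

lemma spec_iff: "l \<in> spec x \<longleftrightarrow> \<not> invb (cs l e - x)"
  unfolding spec_def by simp

lemma invb_minus: "invb (- y) \<longleftrightarrow> invb y"
proof -
  have "- y = cs (-1) y" by (simp add: cs_minusc)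
  then show ?thesis using invb_cs_iff[of "-1" y] by simp
qed

lemma near_invb:
  assumes "invb (cs l0 e - h)"
  shows "\<exists>\<eta>>0. \<forall>l. cmod (l - l0) < \<eta> \<longrightarrow> invb (cs l e - h)"
proof -
  obtain y where y: "isinv (cs l0 e - h) y" using assms invb_def by blast
  define \<eta> where "\<eta> = 1 / (N y + 1)"
  have eta: "\<eta> > 0" unfolding \<eta>_def using N_nonneg[of y] by simp
  show ?thesis
  proof (intro exI[of _ \<eta>] conjI allI impI eta)
    fix l assume l: "cmod (l - l0) < \<eta>"
    have "N (cs (l - l0) e) * N y < 1"
    proof -
      have "N (cs (l - l0) e) * N y \<le> \<eta> * N y"
        using l N_nonneg[of y] by (simp add: N_cs N_e mult_right_mono)
      also have "\<dots> < 1" unfolding \<eta>_def using N_nonneg[of y] by (simp add: field_simps)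
      finally show ?thesis .
    qed
    from perturb[OF y this] obtain y' where "isinv (cs l0 e - h + cs (l - l0) e) y'" by blast
    moreover have "cs l0 e - h + cs (l - l0) e = cs l e - h" by (simp add: cs_diffc)
    ultimately show "invb (cs l e - h)" unfolding invb_def by metis
  qed
qed

lemma spec_zero: "0 \<in> spec 0"
  unfolding spec_def using not_invb_0 by simp

lemma sa_spec_max:
  assumes h: "sa h"
  shows "\<exists>l\<in>spec h. cmod l = N h"
proof (cases "N h = 0")
  case True
  then have "h = 0" by (simp add: N_eq0)
  then show ?thesis using spec_zero True by force
next
  case False
  define M where "M = N h"
  have M0: "M > 0" using False N_nonneg[of h] unfolding M_def by simp
  show ?thesis
  proof (rule ccontr)
    assume "\<not> (\<exists>l\<in>spec h. cmod l = N h)"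
    then have H0: "\<And>l. l \<in> spec h \<Longrightarrow> cmod l \<noteq> M" unfolding M_def by blast
    have i1: "invb (cs (of_real M) e - h)" using H0[of "of_real M"] M0 unfolding spec_def by auto
    have i2: "invb (cs (of_real (-M)) e - h)" using H0[of "of_real (-M)"] M0 unfolding spec_def by auto
    obtain \<eta>1 where e1: "\<eta>1 > 0" "\<And>l. cmod (l - of_real M) < \<eta>1 \<Longrightarrow> invb (cs l e - h)"
      using near_invb[OF i1] by blast
    obtain \<eta>2 where e2: "\<eta>2 > 0" "\<And>l. cmod (l - of_real (-M)) < \<eta>2 \<Longrightarrow> invb (cs l e - h)"
      using near_invb[OF i2] by blast
    define \<eta> where "\<eta> = min (min \<eta>1 \<eta>2) M"
    have eta: "0 < \<eta>" "\<eta> \<le> \<eta>1" "\<eta> \<le> \<eta>2" "\<eta> \<le> M" unfolding \<eta>_def using e1 e2 M0 by auto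
    define M2 where "M2 = M - \<eta>/2"
    have M2: "0 < M2" "M2 < M" unfolding M2_def using eta by auto
    define x where "x = cs (of_real (1/M2)) h"
    have Hx: "invb (e - cs \<nu> x)" if nu: "cmod \<nu> \<le> 1" for \<nu>
    proof (cases "\<nu> = 0")
      case True then show ?thesis using invb_e by simp
    next
      case False
      define l where "l = of_real M2 / \<nu>"
      have eq: "e - cs \<nu> x = cs (\<nu> / of_real M2) (cs l e - h)"
        unfolding x_def l_def using False M2
        by (simp add: cs_diff cs_mult[symmetric] field_simps)
      have "invb (cs l e - h)"
      proof (rule ccontr)
        assume ni: "\<not> invb (cs l e - h)"
        then have ls: "l \<in> spec h" unfolding spec_def by simp
        have im: "Im l = 0" by (rule sa_spec_real[OF h ls])
        have lb: "cmod l \<le> M" using spec_bound[OF ls] unfolding M_def .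
        have lne: "cmod l \<noteq> M" using H0[OF ls] .
        have lge: "M2 \<le> cmod l"
        proof -
          have "cmod l = M2 / cmod \<nu>" unfolding l_def using M2 by (simp add: norm_divide)
          moreover have "M2 \<le> M2 / cmod \<nu>" using nu False M2 by (simp add: field_simps)
          ultimately show ?thesis by simp
        qed
        have lreal: "l = of_real (Re l)" using im by (simp add: complex_eq_iff)
        have cl: "cmod l = \<bar>Re l\<bar>" using im by (simp add: cmod_eq_Re)
        show False
        proof (cases "Re l \<ge> 0")
          case True
          have "cmod (l - of_real M) = \<bar>Re l - M\<bar>"
            by (subst lreal) (simp flip: of_real_diff)
          also have "\<dots> < \<eta>1" using True cl lb lne lge eta unfolding M2_def by auto
          finally show False using e1(2) ni by blast
        next
          case False
          have "cmod (l - of_real (-M)) = \<bar>Re l + M\<bar>"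
            by (subst lreal) (simp flip: of_real_diff of_real_add)
          also have "\<dots> < \<eta>2" using False cl lb lne lge eta unfolding M2_def by auto
          finally show False using e2(2) ni by blast
        qed
      qed
      moreover have "\<nu> / of_real M2 \<noteq> 0" using False M2 by simp
      ultimately show ?thesis unfolding eq using invb_cs by blast
    qed
    obtain k0 where k0: "\<And>k. k \<ge> k0 \<Longrightarrow> N (Pk x k) \<le> 1" using rickart[OF Hx] by blast
    have "N (Pk x k0) = (M / M2)^(2^k0)"
    proof -
      have "Pk x k0 = cs (of_real ((1/M2)^(2^k0))) (Pk h k0)"
        unfolding x_def Pk_def by (simp add: pw_cs)
      then have "N (Pk x k0) = (1/M2)^(2^k0) * M^(2^k0)"
        using N_pw_sa[OF h, of k0] M2 unfolding M_def by (simp add: N_cs norm_power norm_divide)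
      then show ?thesis by (simp add: power_divide)
    qed
    moreover have "1 < (M / M2)^(2^k0)" using M2 by (simp add: one_less_power)
    ultimately show False using k0[of k0] by simp
  qed
qed

lemma sa_spec_ne: "sa h \<Longrightarrow> spec h \<noteq> {}"
  using sa_spec_max by blast

definition ev :: "'b \<Rightarrow> complex poly \<Rightarrow> 'b" where
  "ev x p = (\<Sum>i\<le>degree p. cs (coeff p i) (pw x i))"

lemma ev_upto:
  assumes "degree p \<le> n"
  shows "ev x p = (\<Sum>i\<le>n. cs (coeff p i) (pw x i))"
proof -
  have "(\<Sum>i\<le>n. cs (coeff p i) (pw x i)) = (\<Sum>i\<le>degree p. cs (coeff p i) (pw x i))"
  proof (rule sum.mono_neutral_right)
    show "\<forall>i\<in>{..n} - {..degree p}. cs (coeff p i) (pw x i) = 0"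
      by (auto simp: coeff_eq_0)
  qed (use assms in auto)
  then show ?thesis unfolding ev_def by simp
qed

lemma ev_add: "ev x (p + q) = ev x p + ev x q"
proof -
  define n where "n = max (degree p) (degree q)"
  have "degree (p + q) \<le> n" unfolding n_def by (rule degree_add_le) auto
  then show ?thesis
    using ev_upto[of p n x] ev_upto[of q n x] ev_upto[of "p + q" n x]
    unfolding n_def by (simp add: cs_addc sum.distrib)
qed

lemma ev_smult: "ev x (smult c p) = cs c (ev x p)"
proof -
  have "ev x (smult c p) = (\<Sum>i\<le>degree p. cs (coeff (smult c p) i) (pw x i))"
    by (rule ev_upto) simp
  then show ?thesis unfolding ev_def by (simp add: cs_sum cs_mult)
qed

lemma ev_0[simp]: "ev x 0 = 0" unfolding ev_def by simp

lemma ev_const: "ev x [:c:] = cs c e" unfolding ev_def by simp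

lemma ev_one: "ev x 1 = e" unfolding one_pCons ev_const by simp

lemma ev_minus: "ev x (- p) = - ev x p"
  using ev_smult[of x "-1" p] by (simp add: cs_minusc)

lemma ev_diff: "ev x (p - q) = ev x p - ev x q"
  using ev_add[of x p "-q"] by (simp add: ev_minus)

lemma ev_pCons: "ev x (pCons a p) = cs a e + x \<diamond> ev x p"
proof -
  define n where "n = degree p"
  have "ev x (pCons a p) = (\<Sum>i\<le>Suc n. cs (coeff (pCons a p) i) (pw x i))"
    by (rule ev_upto) (simp add: n_def degree_pCons_le)
  also have "\<dots> = cs a e + (\<Sum>i\<le>n. cs (coeff p i) (pw x (Suc i)))"
    by (subst sum.atMost_Suc_shift) simp
  also have "(\<Sum>i\<le>n. cs (coeff p i) (pw x (Suc i))) = x \<diamond> ev x p"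
    unfolding ev_def n_def by (simp add: m_sumR cs_mR)
  finally show ?thesis .
qed

lemma ev_X: "ev x [:0, 1:] = x"
  by (simp add: ev_pCons ev_const m_e)

lemma ev_mult: "ev x (p * q) = ev x p \<diamond> ev x q"
proof (induction p rule: pCons_induct)
  case 0 then show ?case by simp
next
  case (pCons a p)
  have "ev x (pCons a p * q) = ev x (smult a q + pCons 0 (p * q))" by simp
  also have "\<dots> = cs a (ev x q) + x \<diamond> (ev x p \<diamond> ev x q)"
    by (simp add: ev_add ev_smult ev_pCons pCons.IH)
  also have "\<dots> = ev x (pCons a p) \<diamond> ev x q"
    by (simp add: ev_pCons m_distR cs_mL e_m m_assoc)
  finally show ?case .
qed

lemma ev_comm: "a \<diamond> x = x \<diamond> a \<Longrightarrow> a \<diamond> ev x p = ev x p \<diamond> a"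
  unfolding ev_def by (simp add: m_sumL m_sumR cs_mL cs_mR comm_pw)

lemma ev_ev_comm: "ev x p \<diamond> ev x q = ev x q \<diamond> ev x p"
  by (simp add: ev_mult[symmetric] mult.commute)

lemma ev_prod: "ev x (\<Prod>i<n. f i) = foldr (\<lambda>i acc. acc \<diamond> ev x (f i)) (rev [0..<n]) e"
  by (induction n) (simp_all add: ev_one ev_mult)

lemma invb_ev_prod:
  fixes n :: nat
  assumes "\<And>i. i < n \<Longrightarrow> invb (ev x (f i))"
  shows "invb (ev x (\<Prod>i<n. f i))"
  using assms
proof (induction n)
  case 0 then show ?case by (simp add: ev_one invb_e)
next
  case (Suc n)
  have "ev x (\<Prod>i<Suc n. f i) = ev x (\<Prod>i<n. f i) \<diamond> ev x (f n)" by (simp add: ev_mult)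
  then show ?case using Suc invb_m by simp
qed

definition rpoly :: "complex poly \<Rightarrow> bool" where
  "rpoly p \<longleftrightarrow> (\<forall>i. Im (coeff p i) = 0)"

lemma sr_ev: "sr (ev x p) = ev (sr x) (map_poly cnj p)"
proof -
  have "ev (sr x) (map_poly cnj p) = (\<Sum>i\<le>degree p. cs (coeff (map_poly cnj p) i) (pw (sr x) i))"
    unfolding ev_def by (simp add: degree_map_poly)
  then show ?thesis unfolding ev_def by (simp add: sr_sum sr_cs sr_pw coeff_map_poly)
qed

lemma rpoly_cnj: "rpoly p \<Longrightarrow> map_poly cnj p = p"
  unfolding rpoly_def by (intro poly_eqI) (simp add: coeff_map_poly complex_eq_iff)

lemma sa_ev: "sa x \<Longrightarrow> rpoly p \<Longrightarrow> sa (ev x p)"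
  unfolding sa_def by (simp add: sr_ev rpoly_cnj)

lemma ch_pw: "ch (pw x n) = ch x ^ n"
  by (induction n) (simp_all add: ch_e ch_m)

lemma ch_zero: "ch 0 = 0"
  using ch_add[of 0 0] by simp

lemma ch_sum: "ch (sum f A) = (\<Sum>i\<in>A. ch (f i))"
  by (induction A rule: infinite_finite_induct) (simp_all add: ch_add ch_zero)

lemma ch_ev: "ch (ev x p) = poly p (ch x)"
  unfolding ev_def by (simp add: ch_sum ch_cs ch_pw poly_altdef)

lemma ch_minus: "ch (- x) = - ch x"
  using ch_add[of x "-x"] by (simp add: ch_zero eq_neg_iff_add_eq_0 add.commute)

lemma ch_diff: "ch (x - y) = ch x - ch y"
  using ch_add[of x "-y"] by (simp add: ch_minus)

lemma KL:
  assumes h: "sa h" and p: "rpoly p"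
  shows "\<exists>z\<in>spec h. N (ev h p) = cmod (poly p z)"
proof -
  obtain \<mu> where mu: "\<mu> \<in> spec (ev h p)" "cmod \<mu> = N (ev h p)"
    using sa_spec_max[OF sa_ev[OF h p]] by blast
  define q where "q = p - [:\<mu>:]"
  have evq: "ev h q = - (cs \<mu> e - ev h p)" unfolding q_def by (simp add: ev_diff ev_const)
  have nq: "\<not> invb (ev h q)" using mu(1) unfolding evq invb_minus spec_def by simp
  show ?thesis
  proof (cases "degree q = 0")
    case True
    then obtain c where c: "q = [:c:]" by (meson degree_eq_zeroE)
    then have "c = 0" using nq invb_cs_iff[of c e] invb_e by (auto simp: ev_const)
    then have "p = [:\<mu>:]" using c unfolding q_def by simp
    moreover obtain z where "z \<in> spec h" using sa_spec_ne[OF h] by blast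
    ultimately show ?thesis using mu(2) by auto
  next
    case False
    then have q0: "q \<noteq> 0" by auto
    obtain r where r: "smult (lead_coeff q) (\<Prod>i<degree q. [:-r i, 1:]) = q"
      using complex_poly_decompose' by blast
    have lc: "lead_coeff q \<noteq> 0" using q0 by simp
    have "\<not> invb (ev h (\<Prod>i<degree q. [:-r i, 1:]))"
    proof
      assume "invb (ev h (\<Prod>i<degree q. [:-r i, 1:]))"
      then have "invb (ev h q)" using lc invb_cs r[symmetric] ev_smult by metis
      then show False using nq by simp
    qed
    then obtain i where i: "i < degree q" "\<not> invb (ev h [:-r i, 1:])"
      using invb_ev_prod[where n="degree q" and x=h and f="\<lambda>i. [:-r i, 1:]"] by blast
    have eq: "ev h [:-r i, 1:] = - (cs (r i) e - h)"
      by (simp add: ev_pCons ev_const m_e cs_minusc)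
    have "r i \<in> spec h" using i(2) unfolding spec_def mem_Collect_eq eq invb_minus .
    moreover have "poly q (r i) = 0"
    proof -
      have "poly (\<Prod>i<degree q. [:-r i, 1:]) (r i) = 0"
        using i(1) by (auto simp: poly_prod prod_zero_iff)
      then show ?thesis using r by (metis poly_smult mult_zero_right)
    qed
    then have "poly p (r i) = \<mu>" unfolding q_def by simp
    ultimately show ?thesis using mu(2) by (intro bexI[of _ "r i"]) auto
  qed
qed

lemma spec_sa_real: "sa h \<Longrightarrow> z \<in> spec h \<Longrightarrow> z = of_real (Re z)"
  using sa_spec_real by (simp add: complex_eq_iff)

lemma KL_bound:
  assumes h: "sa h" and p: "rpoly p"
    and b: "\<And>t. \<bar>t\<bar> \<le> N h \<Longrightarrow> cmod (poly p (of_real t)) \<le> \<epsilon>"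
  shows "N (ev h p) \<le> \<epsilon>"
proof -
  obtain z where z: "z \<in> spec h" "N (ev h p) = cmod (poly p z)" using KL[OF h p] by blast
  have "z = of_real (Re z)" using spec_sa_real[OF h z(1)] .
  moreover have "\<bar>Re z\<bar> \<le> N h" using spec_bound[OF z(1)] abs_Re_le_cmod order_trans by blast
  ultimately show ?thesis using b[of "Re z"] z(2) by metis
qed

definition pos :: "'b \<Rightarrow> bool" where
  "pos x \<longleftrightarrow> sa x \<and> (\<forall>l\<in>spec x. 0 \<le> Re l)"

lemma spec_shift: "l \<in> spec x \<longleftrightarrow> of_real t - l \<in> spec (cs (of_real t) e - x)"
proof -
  have eq: "cs (of_real t - l) e - (cs (of_real t) e - x) = - (cs l e - x)"
    by (simp add: cs_diffc)
  show ?thesis unfolding spec_def by (simp only: mem_Collect_eq eq invb_minus)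
qed

lemma sa_sub: "sa x \<Longrightarrow> sa (cs (of_real t) e - x)"
  unfolding sa_def by (simp add: sr_diff sr_cs)

lemma sa_add: "sa x \<Longrightarrow> sa y \<Longrightarrow> sa (x + y)"
  unfolding sa_def by (simp add: sr_add)

lemma sa_scaleR: "sa x \<Longrightarrow> sa (scaleR r x)"
  unfolding sa_def by (simp add: sr_scaleR)

lemma sa_minus: "sa x \<Longrightarrow> sa (- x)"
  unfolding sa_def by (simp add: sr_minus)

lemma pos_of_N:
  assumes "sa x" "N (cs (of_real t) e - x) \<le> t"
  shows "pos x"
  unfolding pos_def
proof (intro conjI assms ballI)
  fix l assume l: "l \<in> spec x"
  have lr: "l = of_real (Re l)" using spec_sa_real[OF assms(1) l] .
  show "0 \<le> Re l"
  proof (rule ccontr)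
    assume "\<not> 0 \<le> Re l"
    have "of_real t - l \<in> spec (cs (of_real t) e - x)" using l spec_shift by blast
    then have "cmod (of_real t - l) \<le> t" using spec_bound assms(2) order_trans by blast
    moreover have "cmod (of_real t - l) = \<bar>t - Re l\<bar>"
      by (subst lr) (simp flip: of_real_diff)
    ultimately show False using \<open>\<not> 0 \<le> Re l\<close> by auto
  qed
qed

lemma N_of_pos:
  assumes "pos x" "N x \<le> t"
  shows "N (cs (of_real t) e - x) \<le> t"
proof -
  have sx: "sa x" using assms(1) pos_def by blast
  obtain \<mu> where mu: "\<mu> \<in> spec (cs (of_real t) e - x)" "cmod \<mu> = N (cs (of_real t) e - x)"
    using sa_spec_max[OF sa_sub[OF sx]] by blast
  define l where "l = of_real t - \<mu>"
  have l: "l \<in> spec x" using mu(1) spec_shift[of l x t] unfolding l_def by simp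
  have lr: "l = of_real (Re l)" using spec_sa_real[OF sx l] .
  have "0 \<le> Re l" using assms(1) l unfolding pos_def by blast
  moreover have "Re l \<le> t" using spec_bound[OF l] assms(2) abs_Re_le_cmod[of l] by linarith
  moreover have "\<mu> = of_real (t - Re l)" unfolding l_def using lr
    by (metis add_diff_cancel_left' diff_add_cancel l_def of_real_diff)
  then have "cmod \<mu> = \<bar>t - Re l\<bar>" by (simp del: of_real_diff)
  ultimately show ?thesis using mu(2) by linarith
qed

lemma pos_add:
  assumes "pos x" "pos y"
  shows "pos (x + y)"
proof (rule pos_of_N)
  show "sa (x + y)" using assms sa_add pos_def by blast
  have "N (cs (of_real (N x + N y)) e - (x + y)) =
        N ((cs (of_real (N x)) e - x) + (cs (of_real (N y)) e - y))"
    by (simp add: cs_addc algebra_simps)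
  also have "\<dots> \<le> N x + N y"
    using N_tri N_of_pos[OF assms(1) order_refl] N_of_pos[OF assms(2) order_refl]
    by (meson add_mono order_trans)
  finally show "N (cs (of_real (N x + N y)) e - (x + y)) \<le> N x + N y" .
qed

lemma spec_minus: "l \<in> spec (- x) \<longleftrightarrow> - l \<in> spec x"
proof -
  have eq: "cs l e - - x = - (cs (- l) e - x)" by (simp add: cs_minusc)
  show ?thesis unfolding spec_def by (simp only: mem_Collect_eq eq invb_minus)
qed

lemma pos_square:
  assumes h: "sa h"
  shows "pos (h \<diamond> h)"
  unfolding pos_def
proof (intro conjI ballI)
  show "sa (h \<diamond> h)" using h unfolding sa_def by (simp add: sr_m)
  fix l assume l: "l \<in> spec (h \<diamond> h)"
  define s where "s = csqrt l"
  have ss: "s * s = l" unfolding s_def by (simp add: power2_eq_square[symmetric])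
  have a1: "cs s e \<diamond> cs s e = cs l e" by (simp add: cs_mL cs_mR e_m cs_mult[symmetric] ss)
  have a2: "cs s e \<diamond> h = cs s h" by (simp add: cs_mL e_m)
  have a3: "h \<diamond> cs s e = cs s h" by (simp add: cs_mR m_e)
  have "(cs s e - h) \<diamond> (cs s e + h) = (cs s e \<diamond> cs s e + cs s e \<diamond> h) - (h \<diamond> cs s e + h \<diamond> h)"
    by (simp add: m_distL m_diffL algebra_simps)
  also have "\<dots> = cs l e - h \<diamond> h" unfolding a1 a2 a3 by simp
  finally have fac: "cs l e - h \<diamond> h = (cs s e - h) \<diamond> (cs s e + h)" by simp
  have "\<not> invb ((cs s e - h) \<diamond> (cs s e + h))" using l fac unfolding spec_def by simp
  then have "\<not> invb (cs s e - h) \<or> \<not> invb (cs s e + h)" using invb_m by blast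
  then have "s \<in> spec h \<or> - s \<in> spec h"
  proof
    assume "\<not> invb (cs s e + h)"
    moreover have eq: "cs s e + h = - (cs (- s) e - h)" by (simp add: cs_minusc)
    ultimately have "\<not> invb (cs (- s) e - h)" using invb_minus by metis
    then show ?thesis unfolding spec_def by simp
  qed (simp add: spec_def)
  then have "Im s = 0" using sa_spec_real[OF h] by force
  then show "0 \<le> Re l" unfolding ss[symmetric] by simp
qed

lemma pos_zero:
  assumes "pos x" "pos (- x)"
  shows "x = 0"
proof -
  have sx: "sa x" using assms pos_def by blast
  obtain l where l: "l \<in> spec x" "cmod l = N x" using sa_spec_max[OF sx] by blast
  have "0 \<le> Re l" using assms(1) l(1) pos_def by blast
  moreover have "0 \<le> Re (- l)" using assms(2) l(1) spec_minus[of "-l" x] pos_def by auto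
  moreover have "Im l = 0" using sa_spec_real[OF sx l(1)] .
  ultimately have "l = 0" by (simp add: complex_eq_iff)
  then show ?thesis using l(2) N_eq0 by simp
qed

lemma cs_two: "cs 2 x = x + x"
  using cs_real[of 2 x] by (simp add: scaleR_2)

lemma pos_scale_inv:
  assumes "pos (x + x)"
  shows "pos x"
  unfolding pos_def
proof (intro conjI ballI)
  have "sa (x + x)" using assms pos_def by blast
  then have "sa (scaleR (1/2) (x + x))" by (rule sa_scaleR)
  then show "sa x" by (simp add: scaleR_2[symmetric])
  fix l assume l: "l \<in> spec x"
  have "cs (2 * l) e - (x + x) = cs 2 (cs l e - x)"
    by (simp add: cs_diff cs_mult[symmetric] cs_two)
  then have "2 * l \<in> spec (x + x)" using l invb_cs_iff[of 2] unfolding spec_def by simp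
  then have "0 \<le> Re (2 * l)" using assms pos_def by blast
  then show "0 \<le> Re l" by simp
qed

lemma spec_flip:
  assumes "l \<noteq> 0" "invb (cs l e - x \<diamond> y)"
  shows "invb (cs l e - y \<diamond> x)"
proof -
  obtain w where w: "isinv (cs l e - x \<diamond> y) w" using assms(2) invb_def by blast
  have w1: "(cs l e - x \<diamond> y) \<diamond> w = e" and w2: "w \<diamond> (cs l e - x \<diamond> y) = e"
    using w unfolding isinv_def by auto
  define v where "v = e + y \<diamond> w \<diamond> x"
  have 1: "(cs l e - y \<diamond> x) \<diamond> v = cs l e"
  proof -
    have "(cs l e - y \<diamond> x) \<diamond> v = cs l e - y \<diamond> x + (cs l (y \<diamond> w \<diamond> x) - y \<diamond> x \<diamond> y \<diamond> w \<diamond> x)"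
      unfolding v_def by (simp add: m_distL m_diffL cs_mL e_m m_e m_assoc cs_add)
    also have "cs l (y \<diamond> w \<diamond> x) - y \<diamond> x \<diamond> y \<diamond> w \<diamond> x = y \<diamond> ((cs l e - x \<diamond> y) \<diamond> w) \<diamond> x"
      by (simp add: m_diffL m_diffR cs_mL cs_mR e_m m_assoc)
    also have "\<dots> = y \<diamond> x" using w1 by (simp add: m_e)
    finally show ?thesis by simp
  qed
  have 2: "v \<diamond> (cs l e - y \<diamond> x) = cs l e"
  proof -
    have "v \<diamond> (cs l e - y \<diamond> x) = cs l e - y \<diamond> x + (cs l (y \<diamond> w \<diamond> x) - y \<diamond> w \<diamond> x \<diamond> y \<diamond> x)"
      unfolding v_def by (simp add: m_distR m_diffR cs_mR e_m m_e m_assoc cs_add)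
    also have "cs l (y \<diamond> w \<diamond> x) - y \<diamond> w \<diamond> x \<diamond> y \<diamond> x = y \<diamond> (w \<diamond> (cs l e - x \<diamond> y)) \<diamond> x"
      by (simp add: m_diffL m_diffR cs_mL cs_mR m_e m_assoc)
    also have "\<dots> = y \<diamond> x" using w2 by (simp add: m_e)
    finally show ?thesis by simp
  qed
  have "isinv (cs l e - y \<diamond> x) (cs (inverse l) v)"
    unfolding isinv_def using 1 2 assms(1) by (simp add: cs_mL cs_mR cs_mult[symmetric])
  then show ?thesis unfolding invb_def by blast
qed

lemma neg_square_zero:
  assumes e0: "sa e0" and c: "sr c \<diamond> c = - (e0 \<diamond> e0)"
  shows "c = 0"
proof -
  define x1 where "x1 = c + sr c"
  define y1 where "y1 = cs (- \<i>) (c - sr c)"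
  have sx: "sa x1" unfolding x1_def sa_def by (simp add: sr_add sr_sr add.commute)
  have sy: "sa y1" unfolding y1_def sa_def by (simp add: sr_cs sr_diff sr_sr cs_diff cs_minusc)
  have key: "x1 \<diamond> x1 + y1 \<diamond> y1 = (c \<diamond> sr c + c \<diamond> sr c) + (sr c \<diamond> c + sr c \<diamond> c)"
  proof -
    have "y1 \<diamond> y1 = cs ((- \<i>) * (- \<i>)) ((c - sr c) \<diamond> (c - sr c))"
      unfolding y1_def by (simp only: cs_mL cs_mR cs_mult[symmetric])
    also have "(- \<i>) * (- \<i>) = - 1" by simp
    finally have "y1 \<diamond> y1 = - ((c - sr c) \<diamond> (c - sr c))" by (simp add: cs_minusc)
    then show ?thesis unfolding x1_def
      by (simp add: m_distL m_distR m_diffL m_diffR algebra_simps)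
  qed
  have pcc: "pos (c \<diamond> sr c)"
  proof -
    have eqn: "c \<diamond> sr c + c \<diamond> sr c = (x1 \<diamond> x1 + y1 \<diamond> y1) + (e0 \<diamond> e0 + e0 \<diamond> e0)"
      using key c by (simp add: algebra_simps)
    have P: "pos ((x1 \<diamond> x1 + y1 \<diamond> y1) + (e0 \<diamond> e0 + e0 \<diamond> e0))"
      using pos_add[OF pos_add[OF pos_square[OF sx] pos_square[OF sy]] pos_add[OF pos_square[OF e0] pos_square[OF e0]]] .
    have "pos (c \<diamond> sr c + c \<diamond> sr c)" unfolding eqn by (rule P)
    then show ?thesis by (rule pos_scale_inv)
  qed
  have sX: "sa (sr c \<diamond> c)" unfolding sa_def by (simp add: sr_m sr_sr)
  have sp: "spec (sr c \<diamond> c) \<subseteq> {0}"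
  proof
    fix l assume l: "l \<in> spec (sr c \<diamond> c)"
    show "l \<in> {0}"
    proof (rule ccontr)
      assume ln: "l \<notin> {0}"
      then have "l \<in> spec (c \<diamond> sr c)" using l spec_flip[of l c "sr c"] unfolding spec_def by auto
      then have "0 \<le> Re l" using pcc pos_def by blast
      moreover have "- l \<in> spec (e0 \<diamond> e0)" using l c spec_minus[of l "e0 \<diamond> e0"] by simp
      then have "0 \<le> Re (- l)" using pos_square[OF e0] pos_def by blast
      moreover have "Im l = 0" using sa_spec_real[OF sX l] .
      ultimately have "l = 0" by (simp add: complex_eq_iff)
      then show False using ln by simp
    qed
  qed
  have "pos (sr c \<diamond> c)" "pos (- (sr c \<diamond> c))"
    using sp sX sa_minus[OF sX] spec_minus[of _ "sr c \<diamond> c"] unfolding pos_def by auto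
  then have "sr c \<diamond> c = 0" by (rule pos_zero)
  then have "N c ^ 2 = 0" using N_cstar[of c] by simp
  then show ?thesis using N_eq0 by simp
qed

end


context ucstar
begin

lemma rpoly_add: "rpoly p \<Longrightarrow> rpoly q \<Longrightarrow> rpoly (p + q)"
  unfolding rpoly_def by simp

lemma rpoly_minus: "rpoly p \<Longrightarrow> rpoly (- p)"
  unfolding rpoly_def by simp

lemma rpoly_diff: "rpoly p \<Longrightarrow> rpoly q \<Longrightarrow> rpoly (p - q)"
  unfolding rpoly_def by simp

lemma rpoly_const: "rpoly [:of_real c:]"
  unfolding rpoly_def by (simp add: coeff_pCons split: nat.split)

lemma rpoly_X: "rpoly [:0, 1:]"
  unfolding rpoly_def by (simp add: coeff_pCons split: nat.split)

lemma rpoly_mult: "rpoly p \<Longrightarrow> rpoly q \<Longrightarrow> rpoly (p * q)"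
  unfolding rpoly_def by (simp add: coeff_mult Im_sum)

lemma rpoly_poly_real: "rpoly p \<Longrightarrow> Im (poly p (of_real t)) = 0"
  unfolding rpoly_def poly_altdef by (simp add: Im_sum)

definition approx :: "'b \<Rightarrow> (real \<Rightarrow> real) \<Rightarrow> 'b \<Rightarrow> bool" where
  "approx h f y \<longleftrightarrow> (\<forall>\<epsilon>>0. \<exists>p. rpoly p \<and>
       (\<forall>t. \<bar>t\<bar> \<le> N h \<longrightarrow> cmod (of_real (f t) - poly p (of_real t)) \<le> \<epsilon>) \<and>
       N (y - ev h p) \<le> \<epsilon>)"

lemma approxD:
  assumes "approx h f y" "\<epsilon> > 0"
  obtains p where "rpoly p" "\<And>t. \<bar>t\<bar> \<le> N h \<Longrightarrow> cmod (of_real (f t) - poly p (of_real t)) \<le> \<epsilon>"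
    "N (y - ev h p) \<le> \<epsilon>"
  using assms unfolding approx_def by blast

lemma approx_cong:
  assumes "approx h f y" "\<And>t. \<bar>t\<bar> \<le> N h \<Longrightarrow> f t = g t"
  shows "approx h g y"
  using assms unfolding approx_def by metis

lemma approx_ev:
  assumes "rpoly p" "\<And>t. \<bar>t\<bar> \<le> N h \<Longrightarrow> of_real (f t) = poly p (of_real t)"
  shows "approx h f (ev h p)"
  unfolding approx_def using assms by (intro allI impI exI[of _ p]) auto

lemma approx_id: "approx h (\<lambda>t. t) h"
  using approx_ev[OF rpoly_X, of h "\<lambda>t. t"] by (simp add: ev_X)

lemma approx_zero: "approx h (\<lambda>t. 0) 0"
  using approx_ev[of 0 h "\<lambda>t. 0"] by (simp add: rpoly_def)

lemma eps_zero:
  fixes a :: real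
  assumes "\<And>\<epsilon>. \<epsilon> > 0 \<Longrightarrow> a \<le> \<epsilon>"
  shows "a \<le> 0"
proof (rule field_le_epsilon)
  fix \<epsilon> :: real assume "0 < \<epsilon>" then show "a \<le> 0 + \<epsilon>" using assms by simp
qed

lemma N_zero_eps:
  assumes "\<And>\<epsilon>. \<epsilon> > 0 \<Longrightarrow> N x \<le> c * \<epsilon>" "c \<ge> 0"
  shows "x = 0"
proof -
  have "N x \<le> \<epsilon>" if "\<epsilon> > 0" for \<epsilon>
  proof -
    have "N x \<le> c * (\<epsilon> / (c + 1))" using assms(1)[of "\<epsilon> / (c + 1)"] that assms(2) by simp
    also have "\<dots> \<le> (c + 1) * (\<epsilon> / (c + 1))"
      by (rule mult_right_mono) (use that assms(2) in auto)
    also have "(c + 1) * (\<epsilon> / (c + 1)) = \<epsilon>" using assms(2) by simp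
    finally show ?thesis .
  qed
  then have "N x \<le> 0" by (rule eps_zero)
  then show ?thesis using N_nonneg[of x] N_eq0 by simp
qed

lemma approx_unique:
  assumes h: "sa h" and a: "approx h f y" "approx h f y'"
  shows "y = y'"
proof -
  have "y - y' = 0"
proof (rule N_zero_eps[of _ 4])
  fix \<epsilon> :: real assume ep: "\<epsilon> > 0"
  obtain p where p: "rpoly p" "\<And>t. \<bar>t\<bar> \<le> N h \<Longrightarrow> cmod (of_real (f t) - poly p (of_real t)) \<le> \<epsilon>"
    "N (y - ev h p) \<le> \<epsilon>" using approxD[OF a(1) ep] by blast
  obtain q where q: "rpoly q" "\<And>t. \<bar>t\<bar> \<le> N h \<Longrightarrow> cmod (of_real (f t) - poly q (of_real t)) \<le> \<epsilon>"
    "N (y' - ev h q) \<le> \<epsilon>" using approxD[OF a(2) ep] by blast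
  have "N (ev h (p - q)) \<le> 2 * \<epsilon>"
  proof (rule KL_bound[OF h rpoly_diff[OF p(1) q(1)]])
    fix t :: real assume t: "\<bar>t\<bar> \<le> N h"
    have eqp: "poly (p - q) (of_real t) = (of_real (f t) - poly q (of_real t)) - (of_real (f t) - poly p (of_real t))"
      by simp
    have "cmod (poly (p - q) (of_real t)) \<le> cmod (of_real (f t) - poly p (of_real t)) + cmod (of_real (f t) - poly q (of_real t))"
      unfolding eqp using norm_triangle_ineq4[of "of_real (f t) - poly q (of_real t)" "of_real (f t) - poly p (of_real t)"]
      by (simp add: add.commute)
    then show "cmod (poly (p - q) (of_real t)) \<le> 2 * \<epsilon>" using p(2)[OF t] q(2)[OF t] by simp
  qed
  then have "N (ev h p - ev h q) \<le> 2 * \<epsilon>" by (simp add: ev_diff)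
  moreover have "N (y - y') \<le> N (y - ev h p) + N (ev h p - ev h q) + N (ev h q - y')"
    using N_tri3[where x=y and z=y' and y="ev h p"] N_tri3[where x="ev h p" and z=y' and y="ev h q"] by simp
  moreover have "N (ev h q - y') \<le> \<epsilon>" using q(3) N_diff_commute by simp
  ultimately show "N (y - y') \<le> 4 * \<epsilon>" using p(3) by simp
qed simp
  then show ?thesis by simp
qed

lemma approx_add:
  assumes a: "approx h f y" "approx h g y'"
  shows "approx h (\<lambda>t. f t + g t) (y + y')"
  unfolding approx_def
proof (intro allI impI)
  fix \<epsilon> :: real assume ep: "\<epsilon> > 0"
  then have ep2: "\<epsilon>/2 > 0" by simp
  obtain p where p: "rpoly p" "\<And>t. \<bar>t\<bar> \<le> N h \<Longrightarrow> cmod (of_real (f t) - poly p (of_real t)) \<le> \<epsilon>/2"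
    "N (y - ev h p) \<le> \<epsilon>/2" using approxD[OF a(1) ep2] by blast
  obtain q where q: "rpoly q" "\<And>t. \<bar>t\<bar> \<le> N h \<Longrightarrow> cmod (of_real (g t) - poly q (of_real t)) \<le> \<epsilon>/2"
    "N (y' - ev h q) \<le> \<epsilon>/2" using approxD[OF a(2) ep2] by blast
  show "\<exists>r. rpoly r \<and> (\<forall>t. \<bar>t\<bar> \<le> N h \<longrightarrow> cmod (of_real (f t + g t) - poly r (of_real t)) \<le> \<epsilon>) \<and>
            N (y + y' - ev h r) \<le> \<epsilon>"
  proof (intro exI[of _ "p + q"] conjI allI impI)
    show "rpoly (p + q)" using p q rpoly_add by blast
    fix t :: real assume t: "\<bar>t\<bar> \<le> N h"
    have "cmod (of_real (f t + g t) - poly (p + q) (of_real t)) \<le>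
          cmod (of_real (f t) - poly p (of_real t)) + cmod (of_real (g t) - poly q (of_real t))"
      by (rule order_trans[OF _ norm_triangle_ineq]) (simp add: algebra_simps)
    then show "cmod (of_real (f t + g t) - poly (p + q) (of_real t)) \<le> \<epsilon>"
      using p(2)[OF t] q(2)[OF t] by simp
  next
    have "N (y + y' - ev h (p + q)) = N ((y - ev h p) + (y' - ev h q))"
      by (simp add: ev_add algebra_simps)
    also have "\<dots> \<le> \<epsilon>" using N_tri[of "y - ev h p" "y' - ev h q"] p(3) q(3) by linarith
    finally show "N (y + y' - ev h (p + q)) \<le> \<epsilon>" .
  qed
qed

lemma approx_neg:
  assumes a: "approx h f y"
  shows "approx h (\<lambda>t. - f t) (- y)"
  unfolding approx_def
proof (intro allI impI)
  fix \<epsilon> :: real assume ep: "\<epsilon> > 0"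
  obtain p where p: "rpoly p" "\<And>t. \<bar>t\<bar> \<le> N h \<Longrightarrow> cmod (of_real (f t) - poly p (of_real t)) \<le> \<epsilon>"
    "N (y - ev h p) \<le> \<epsilon>" using approxD[OF a ep] by blast
  show "\<exists>r. rpoly r \<and> (\<forall>t. \<bar>t\<bar> \<le> N h \<longrightarrow> cmod (of_real (- f t) - poly r (of_real t)) \<le> \<epsilon>) \<and>
            N (- y - ev h r) \<le> \<epsilon>"
  proof (intro exI[of _ "- p"] conjI allI impI)
    show "rpoly (- p)" using p rpoly_minus by blast
    fix t :: real assume t: "\<bar>t\<bar> \<le> N h"
    have eq: "of_real (- f t) - poly (- p) (of_real t) = - (of_real (f t) - poly p (of_real t))" by simp
    have "cmod (of_real (- f t) - poly (- p) (of_real t)) = cmod (of_real (f t) - poly p (of_real t))"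
      unfolding eq norm_minus_cancel ..
    then show "cmod (of_real (- f t) - poly (- p) (of_real t)) \<le> \<epsilon>" using p(2)[OF t] by simp
  next
    have eq2: "- y - ev h (- p) = - (y - ev h p)" by (simp add: ev_minus)
    have "N (- y - ev h (- p)) = N (y - ev h p)" unfolding eq2 by (rule N_minus)
    then show "N (- y - ev h (- p)) \<le> \<epsilon>" using p(3) by simp
  qed
qed

lemma approx_diff:
  assumes "approx h f y" "approx h g y'"
  shows "approx h (\<lambda>t. f t - g t) (y - y')"
  using approx_add[OF assms(1) approx_neg[OF assms(2)]] by simp

lemma cont_bound:
  fixes M :: real and f :: "real \<Rightarrow> real"
  assumes "continuous_on {-M..M} f"
  shows "\<exists>B. 0 \<le> B \<and> (\<forall>t. \<bar>t\<bar> \<le> M \<longrightarrow> \<bar>f t\<bar> \<le> B)"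
proof -
  have "compact (f ` {-M..M})" by (rule compact_continuous_image[OF assms compact_Icc])
  then obtain B where B: "\<forall>y\<in>f ` {-M..M}. norm y \<le> B" using compact_imp_bounded bounded_iff by blast
  show ?thesis
  proof (intro exI[of _ "max B 0"] conjI allI impI)
    fix t :: real assume "\<bar>t\<bar> \<le> M"
    then have "t \<in> {-M..M}" by auto
    then show "\<bar>f t\<bar> \<le> max B 0" using B by force
  qed simp
qed

lemma approx_mult:
  assumes h: "sa h" and a: "approx h f y" "approx h g y'"
    and cf: "continuous_on {-N h..N h} f" and cg: "continuous_on {-N h..N h} g"
  shows "approx h (\<lambda>t. f t * g t) (y \<diamond> y')"
  unfolding approx_def
proof (intro allI impI)
  fix \<epsilon> :: real assume ep: "\<epsilon> > 0"
  obtain B1 where B1: "0 \<le> B1" "\<And>t. \<bar>t\<bar> \<le> N h \<Longrightarrow> \<bar>f t\<bar> \<le> B1" using cont_bound[OF cf] by blast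
  obtain B2 where B2: "0 \<le> B2" "\<And>t. \<bar>t\<bar> \<le> N h \<Longrightarrow> \<bar>g t\<bar> \<le> B2" using cont_bound[OF cg] by blast
  define B where "B = B1 + B2"
  have Bf: "\<bar>f t\<bar> \<le> B" "\<bar>g t\<bar> \<le> B" if "\<bar>t\<bar> \<le> N h" for t
    using B1(1) B2(1) B1(2)[OF that] B2(2)[OF that] unfolding B_def by linarith+
  have B0: "0 \<le> B" unfolding B_def using B1 B2 by simp
  define K where "K = 2 * B + 2 + N y'"
  have K: "K > 0" unfolding K_def using B0 N_nonneg[of y'] by simp
  define \<delta> where "\<delta> = min 1 (\<epsilon> / K)"
  have d: "0 < \<delta>" "\<delta> \<le> 1" "\<delta> * K \<le> \<epsilon>" unfolding \<delta>_def using ep K by (auto simp: field_simps min_def)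
  obtain p where p: "rpoly p" "\<And>t. \<bar>t\<bar> \<le> N h \<Longrightarrow> cmod (of_real (f t) - poly p (of_real t)) \<le> \<delta>"
    "N (y - ev h p) \<le> \<delta>" using approxD[OF a(1) d(1)] by blast
  obtain q where q: "rpoly q" "\<And>t. \<bar>t\<bar> \<le> N h \<Longrightarrow> cmod (of_real (g t) - poly q (of_real t)) \<le> \<delta>"
    "N (y' - ev h q) \<le> \<delta>" using approxD[OF a(2) d(1)] by blast
  have pb: "cmod (poly p (of_real t)) \<le> B + 1" if t: "\<bar>t\<bar> \<le> N h" for t
  proof -
    have "cmod (poly p (of_real t)) \<le> cmod (of_real (f t)) + cmod (of_real (f t) - poly p (of_real t))"
      by (metis norm_triangle_sub norm_minus_commute)
    then show ?thesis using Bf(1)[OF t] p(2)[OF t] d(2) by simp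
  qed
  have Nev: "N (ev h p) \<le> B + 1" by (rule KL_bound[OF h p(1) pb])
  show "\<exists>r. rpoly r \<and> (\<forall>t. \<bar>t\<bar> \<le> N h \<longrightarrow> cmod (of_real (f t * g t) - poly r (of_real t)) \<le> \<epsilon>) \<and>
            N (y \<diamond> y' - ev h r) \<le> \<epsilon>"
  proof (intro exI[of _ "p * q"] conjI allI impI)
    show "rpoly (p * q)" using p q rpoly_mult by blast
    fix t :: real assume t: "\<bar>t\<bar> \<le> N h"
    define F where "F = (of_real (f t) :: complex)"
    define Gt where "Gt = (of_real (g t) :: complex)"
    define P where "P = poly p (of_real t)"
    define Q where "Q = poly q (of_real t)"
    have "F * Gt - P * Q = F * (Gt - Q) + (F - P) * Q" by (simp add: algebra_simps)
    then have "cmod (F * Gt - P * Q) \<le> cmod F * cmod (Gt - Q) + cmod (F - P) * cmod Q"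
      by (metis norm_mult norm_triangle_ineq)
    also have "\<dots> \<le> B * \<delta> + \<delta> * (B + 1)"
    proof (rule add_mono)
      show "cmod F * cmod (Gt - Q) \<le> B * \<delta>"
        using Bf(1)[OF t] q(2)[OF t] unfolding F_def Gt_def Q_def
        by (intro mult_mono) auto
      have "cmod Q \<le> B + 1"
      proof -
        have "cmod Q \<le> cmod Gt + cmod (Gt - Q)" by (metis norm_triangle_sub norm_minus_commute)
        then show ?thesis using Bf(2)[OF t] q(2)[OF t] d(2) unfolding Gt_def Q_def by simp
      qed
      then show "cmod (F - P) * cmod Q \<le> \<delta> * (B + 1)"
        using p(2)[OF t] d unfolding F_def P_def by (intro mult_mono) auto
    qed
    also have "\<dots> \<le> \<delta> * K" unfolding K_def using d N_nonneg[of y'] B0 by (simp add: algebra_simps)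
    finally show "cmod (of_real (f t * g t) - poly (p * q) (of_real t)) \<le> \<epsilon>"
      using d(3) unfolding F_def Gt_def P_def Q_def by simp
  next
    have eq: "y \<diamond> y' - ev h (p * q) = (y - ev h p) \<diamond> y' + ev h p \<diamond> (y' - ev h q)"
      by (simp add: ev_mult m_diffL m_diffR)
    have "N (y \<diamond> y' - ev h (p * q)) \<le> N ((y - ev h p) \<diamond> y') + N (ev h p \<diamond> (y' - ev h q))"
      unfolding eq by (rule N_tri)
    also have "\<dots> \<le> N (y - ev h p) * N y' + N (ev h p) * N (y' - ev h q)"
      by (intro add_mono N_m)
    also have "\<dots> \<le> \<delta> * N y' + (B + 1) * \<delta>"
      using p(3) q(3) Nev d B0 by (intro add_mono mult_mono) (auto simp: N_nonneg)
    also have "\<dots> \<le> \<delta> * K" unfolding K_def using d B0 by (simp add: algebra_simps)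
    finally show "N (y \<diamond> y' - ev h (p * q)) \<le> \<epsilon>" using d(3) by simp
  qed
qed

lemma approx_sa:
  assumes "approx h f y" "sa h"
  shows "sa y"
proof -
  have "y - sr y = 0"
  proof (rule N_zero_eps[of _ 2])
    fix \<epsilon> :: real assume ep: "\<epsilon> > 0"
    obtain p where p: "rpoly p" "N (y - ev h p) \<le> \<epsilon>" using approxD[OF assms(1) ep] by blast
    have s: "sr (ev h p) = ev h p" using sa_ev[OF assms(2) p(1)] sa_def by simp
    have "y - sr y = (y - ev h p) + sr (ev h p - y)" using s by (simp add: sr_diff)
    then have "N (y - sr y) \<le> N (y - ev h p) + N (ev h p - y)" by (metis N_tri N_sr)
    then show "N (y - sr y) \<le> 2 * \<epsilon>" using p(2) N_diff_commute[of y] ep by simp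
  qed simp
  then show ?thesis unfolding sa_def by simp
qed

lemma approx_comm:
  assumes "approx h f y" "a \<diamond> h = h \<diamond> a"
  shows "a \<diamond> y = y \<diamond> a"
proof -
  have "a \<diamond> y - y \<diamond> a = 0"
  proof (rule N_zero_eps[of _ "2 * N a"])
    fix \<epsilon> :: real assume ep: "\<epsilon> > 0"
    obtain p where p: "rpoly p" "N (y - ev h p) \<le> \<epsilon>" using approxD[OF assms(1) ep] by blast
    have c: "a \<diamond> ev h p = ev h p \<diamond> a" using ev_comm[OF assms(2)] .
    have eq: "a \<diamond> y - y \<diamond> a = a \<diamond> (y - ev h p) + (ev h p - y) \<diamond> a"
      using c by (simp add: m_diffL m_diffR)
    have "N (a \<diamond> y - y \<diamond> a) \<le> N (a \<diamond> (y - ev h p)) + N ((ev h p - y) \<diamond> a)"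
      unfolding eq by (rule N_tri)
    also have "\<dots> \<le> N a * N (y - ev h p) + N (ev h p - y) * N a"
      by (intro add_mono N_m)
    also have "\<dots> \<le> N a * \<epsilon> + \<epsilon> * N a"
      using p(2) N_diff_commute[of y] ep by (intro add_mono mult_mono) (auto simp: N_nonneg)
    finally show "N (a \<diamond> y - y \<diamond> a) \<le> 2 * N a * \<epsilon>" by (simp add: algebra_simps)
  qed (simp add: N_nonneg)
  then show ?thesis by simp
qed

lemma approx_ch:
  assumes "approx h f y" "ch h = 0" "f 0 = 0"
  shows "ch y = 0"
proof -
  have "cmod (ch y) \<le> \<epsilon>" if ep: "\<epsilon> > 0" for \<epsilon>
  proof -
    have ep2: "\<epsilon>/2 > 0" using ep by simp
    obtain p where p: "rpoly p" "\<And>t. \<bar>t\<bar> \<le> N h \<Longrightarrow> cmod (of_real (f t) - poly p (of_real t)) \<le> \<epsilon>/2"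
      "N (y - ev h p) \<le> \<epsilon>/2" using approxD[OF assms(1) ep2] by blast
    have "ch y = ch (y - ev h p) + poly p 0"
      using ch_ev[of h p] assms(2) by (simp add: ch_diff)
    then have "cmod (ch y) \<le> cmod (ch (y - ev h p)) + cmod (poly p 0)" by (metis norm_triangle_ineq)
    moreover have "cmod (ch (y - ev h p)) \<le> \<epsilon>/2" using ch_bound p(3) order_trans by blast
    moreover have "cmod (poly p 0) \<le> \<epsilon>/2" using p(2)[of 0] assms(3) N_nonneg[of h] by simp
    ultimately show ?thesis by simp
  qed
  then have "cmod (ch y) \<le> 0" by (rule eps_zero)
  then show ?thesis by simp
qed

lemma approx_pos:
  assumes h: "sa h" and a: "approx h f y"
    and f: "\<And>t. \<bar>t\<bar> \<le> N h \<Longrightarrow> 0 \<le> f t \<and> f t \<le> T"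
  shows "pos y"
proof (rule pos_of_N)
  show "sa y" by (rule approx_sa[OF a h])
  have T0: "0 \<le> T" using f[of 0] N_nonneg[of h] by auto
  have "N (cs (of_real T) e - y) \<le> T + \<epsilon>" if ep: "\<epsilon> > 0" for \<epsilon>
  proof -
    have ep2: "\<epsilon>/2 > 0" using ep by simp
    obtain p where p: "rpoly p" "\<And>t. \<bar>t\<bar> \<le> N h \<Longrightarrow> cmod (of_real (f t) - poly p (of_real t)) \<le> \<epsilon>/2"
      "N (y - ev h p) \<le> \<epsilon>/2" using approxD[OF a ep2] by blast
    have "N (ev h ([:of_real T:] - p)) \<le> T + \<epsilon>/2"
    proof (rule KL_bound[OF h rpoly_diff[OF rpoly_const p(1)]])
      fix t :: real assume t: "\<bar>t\<bar> \<le> N h"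
      have "cmod (poly ([:of_real T:] - p) (of_real t)) \<le>
            cmod (of_real (T - f t) :: complex) + cmod (of_real (f t) - poly p (of_real t))"
        by (rule order_trans[OF _ norm_triangle_ineq]) simp
      also have "cmod (of_real (T - f t) :: complex) \<le> T" unfolding norm_of_real using f[OF t] by simp
      finally show "cmod (poly ([:of_real T:] - p) (of_real t)) \<le> T + \<epsilon>/2" using p(2)[OF t] by simp
    qed
    then have "N (cs (of_real T) e - ev h p) \<le> T + \<epsilon>/2" by (simp add: ev_diff ev_const)
    moreover have "N (cs (of_real T) e - y) \<le> N (cs (of_real T) e - ev h p) + N (ev h p - y)"
      by (rule N_tri3)
    moreover have "N (ev h p - y) \<le> \<epsilon>/2" using p(3) N_diff_commute[of y] by simp
    ultimately show ?thesis by simp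
  qed
  then have "N (cs (of_real T) e - y) - T \<le> 0" using eps_zero by (smt (verit))
  then show "N (cs (of_real T) e - y) \<le> T" by simp
qed

end


context ucstar
begin

lemma weierstrass_rpoly:
  assumes f: "continuous_on {-M..M} f" and ep: "\<epsilon> > 0"
  shows "\<exists>P. rpoly P \<and> (\<forall>t. \<bar>t\<bar> \<le> M \<longrightarrow> cmod (of_real (f t) - poly P (of_real t)) \<le> \<epsilon>)"
proof -
  obtain g where g: "real_polynomial_function g" "\<And>x. x \<in> {-M..M} \<Longrightarrow> \<bar>f x - g x\<bar> < \<epsilon>"
    using Stone_Weierstrass_real_polynomial_function[OF compact_Icc f ep] by blast
  obtain a n where an: "g = (\<lambda>x. \<Sum>i\<le>n. a i * x^i)" using g(1) real_polynomial_function_iff_sum by blast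
  define P where "P = (\<Sum>i\<le>n. monom (complex_of_real (a i)) i)"
  have rp: "rpoly P" unfolding rpoly_def P_def by (simp add: coeff_sum coeff_monom Im_sum)
  have pv: "poly P (of_real t) = of_real (g t)" for t
    unfolding P_def an by (simp add: poly_sum poly_monom)
  show ?thesis
  proof (intro exI[of _ P] conjI allI impI rp)
    fix t :: real assume "\<bar>t\<bar> \<le> M"
    then have "t \<in> {-M..M}" by auto
    then have "\<bar>f t - g t\<bar> < \<epsilon>" using g(2) by blast
    then show "cmod (of_real (f t) - poly P (of_real t)) \<le> \<epsilon>"
      unfolding pv by (simp flip: of_real_diff)
  qed
qed

lemma approx_exists:
  assumes h: "sa h" and f: "continuous_on {-N h..N h} f"
  shows "\<exists>y. approx h f y"
proof -
  have "\<forall>n::nat. \<exists>P. rpoly P \<and> (\<forall>t. \<bar>t\<bar> \<le> N h \<longrightarrow> cmod (of_real (f t) - poly P (of_real t)) \<le> 1 / (real n + 1))"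
    using weierstrass_rpoly[OF f] by simp
  then obtain P where P: "\<And>n. rpoly (P n)"
    "\<And>n t. \<bar>t\<bar> \<le> N h \<Longrightarrow> cmod (of_real (f t) - poly (P n) (of_real t)) \<le> 1 / (real n + 1)"
    by metis
  define X where "X = (\<lambda>n. ev h (P n))"
  have XN: "N (X m - X n) \<le> 1 / (real m + 1) + 1 / (real n + 1)" for m n
  proof -
    have "N (ev h (P m - P n)) \<le> 1 / (real m + 1) + 1 / (real n + 1)"
    proof (rule KL_bound[OF h rpoly_diff[OF P(1) P(1)]])
      fix t :: real assume t: "\<bar>t\<bar> \<le> N h"
      have eqp: "poly (P m - P n) (of_real t) = (of_real (f t) - poly (P n) (of_real t)) - (of_real (f t) - poly (P m) (of_real t))"
        by simp
      have "cmod (poly (P m - P n) (of_real t)) \<le> cmod (of_real (f t) - poly (P n) (of_real t)) + cmod (of_real (f t) - poly (P m) (of_real t))"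
        unfolding eqp by (rule norm_triangle_ineq4)
      then show "cmod (poly (P m - P n) (of_real t)) \<le> 1 / (real m + 1) + 1 / (real n + 1)"
        using P(2)[OF t, of m] P(2)[OF t, of n] by simp
    qed
    then show ?thesis unfolding X_def by (simp add: ev_diff)
  qed
  have XN2: "N (X m - X n) \<le> 2 / (real k + 1)" if "m \<ge> k" "n \<ge> k" for m n k
  proof -
    have "1 / (real m + 1) \<le> 1 / (real k + 1)" "1 / (real n + 1) \<le> 1 / (real k + 1)"
      using that by (auto simp: frac_le)
    then show ?thesis using XN[of m n] by simp
  qed
  have "Cauchy X"
  proof (rule metric_CauchyI)
    fix \<epsilon> :: real assume ep: "\<epsilon> > 0"
    obtain k :: nat where k: "2 / (c1 * \<epsilon>) < real k" using reals_Archimedean2 by blast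
    have kk: "2 / (real k + 1) < c1 * \<epsilon>"
    proof -
      have "2 / (c1 * \<epsilon>) < real k + 1" using k by simp
      then show ?thesis using ep c1_pos by (simp add: field_simps)
    qed
    show "\<exists>M. \<forall>m\<ge>M. \<forall>n\<ge>M. dist (X m) (X n) < \<epsilon>"
    proof (intro exI[of _ k] allI impI)
      fix m n assume mn: "k \<le> m" "k \<le> n"
      have "dist (X m) (X n) \<le> N (X m - X n) / c1" unfolding dist_norm by (rule norm_le_N)
      also have "\<dots> < \<epsilon>"
      proof -
        have "N (X m - X n) < c1 * \<epsilon>" using XN2[OF mn] kk by linarith
        then show ?thesis using c1_pos by (simp add: divide_less_eq mult.commute)
      qed
      finally show "dist (X m) (X n) < \<epsilon>" .
    qed
  qed
  then obtain y where y: "X \<longlonglongrightarrow> y" using Cauchy_convergent_iff convergent_def by blast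
  have Ny: "N (y - X k) \<le> 2 / (real k + 1)" for k
  proof -
    have "(\<lambda>m. N (X m - X k)) \<longlonglongrightarrow> N (y - X k)"
      by (intro tendsto_N tendsto_diff y tendsto_const)
    moreover have "\<forall>\<^sub>F m in sequentially. N (X m - X k) \<le> 2 / (real k + 1)"
      using XN2[of k _ k] by (auto simp: eventually_sequentially)
    ultimately show ?thesis by (rule tendsto_upperbound) simp
  qed
  show ?thesis
  proof (intro exI[of _ y], unfold approx_def, intro allI impI)
    fix \<epsilon> :: real assume ep: "\<epsilon> > 0"
    obtain k :: nat where k: "2 / \<epsilon> < real k" using reals_Archimedean2 by blast
    have kk: "2 / (real k + 1) \<le> \<epsilon>"
    proof -
      have "2 / \<epsilon> < real k + 1" using k by simp
      then show ?thesis using ep by (simp add: field_simps)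
    qed
    show "\<exists>p. rpoly p \<and> (\<forall>t. \<bar>t\<bar> \<le> N h \<longrightarrow> cmod (of_real (f t) - poly p (of_real t)) \<le> \<epsilon>) \<and>
              N (y - ev h p) \<le> \<epsilon>"
    proof (intro exI[of _ "P k"] conjI allI impI P(1))
      fix t :: real assume t: "\<bar>t\<bar> \<le> N h"
      have "1 / (real k + 1) \<le> 2 / (real k + 1)" by (simp add: frac_le)
      then show "cmod (of_real (f t) - poly (P k) (of_real t)) \<le> \<epsilon>" using P(2)[OF t, of k] kk by linarith
    next
      show "N (y - ev h (P k)) \<le> \<epsilon>" using Ny[of k] kk unfolding X_def by linarith
    qed
  qed
qed

lemma approx_mult_cong:
  assumes "sa h" "approx h f y" "approx h g y'"
    "continuous_on {-N h..N h} f" "continuous_on {-N h..N h} g"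
    "\<And>t. \<bar>t\<bar> \<le> N h \<Longrightarrow> f t * g t = k t"
  shows "approx h k (y \<diamond> y')"
  using approx_cong[OF approx_mult[OF assms(1-5)] assms(6)] .

lemma KV_approx:
  fixes b :: 'b
  defines "a \<equiv> sr b \<diamond> b"
  shows "approx a (\<lambda>t. max t 0) a"
proof -
  have sa: "sa a" unfolding a_def sa_def by (simp add: sr_m sr_sr)
  define S where "S = {-N a..N a}"
  have cp: "continuous_on S (\<lambda>t. max t 0)" by (intro continuous_intros)
  have cm: "continuous_on S (\<lambda>t. max (- t) 0)" by (intro continuous_intros)
  have c3: "continuous_on S (\<lambda>t. sqrt (max (- t) 0 ^ 3))" by (intro continuous_intros)
  have cmm: "continuous_on S (\<lambda>t. max (- t) 0 * max (- t) 0)" by (intro continuous_intros)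
  obtain yp where yp: "approx a (\<lambda>t. max t 0) yp" using approx_exists[OF sa cp[unfolded S_def]] by blast
  obtain ym where ym: "approx a (\<lambda>t. max (- t) 0) ym" using approx_exists[OF sa cm[unfolded S_def]] by blast
  obtain e3 where e3: "approx a (\<lambda>t. sqrt (max (- t) 0 ^ 3)) e3" using approx_exists[OF sa c3[unfolded S_def]] by blast
  have "approx a (\<lambda>t. t) (yp - ym)"
    using approx_cong[OF approx_diff[OF yp ym], of "\<lambda>t. t"] by simp
  then have a1: "yp - ym = a" using approx_unique[OF sa _ approx_id] by blast
  have "approx a (\<lambda>t. 0) (ym \<diamond> yp)"
    by (rule approx_mult_cong[OF sa ym yp cm[unfolded S_def] cp[unfolded S_def]]) (auto simp: max_def)
  then have a2: "ym \<diamond> yp = 0" using approx_unique[OF sa _ approx_zero] by blast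
  have mm: "approx a (\<lambda>t. max (- t) 0 * max (- t) 0) (ym \<diamond> ym)"
    by (rule approx_mult_cong[OF sa ym ym cm[unfolded S_def] cm[unfolded S_def]]) simp
  have m3: "approx a (\<lambda>t. max (- t) 0 ^ 3) (ym \<diamond> ym \<diamond> ym)"
    by (rule approx_mult_cong[OF sa mm ym cmm[unfolded S_def] cm[unfolded S_def]]) (simp add: power3_eq_cube)
  have e33: "approx a (\<lambda>t. max (- t) 0 ^ 3) (e3 \<diamond> e3)"
    by (rule approx_mult_cong[OF sa e3 e3 c3[unfolded S_def] c3[unfolded S_def]]) simp
  have a3: "e3 \<diamond> e3 = ym \<diamond> ym \<diamond> ym" using approx_unique[OF sa e33 m3] .
  have sym: "sa ym" using approx_sa[OF ym sa] .
  have se3: "sa e3" using approx_sa[OF e3 sa] .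
  define c where "c = b \<diamond> ym"
  have "sr c \<diamond> c = ym \<diamond> a \<diamond> ym"
    unfolding c_def a_def using sym unfolding sa_def by (simp add: sr_m m_assoc)
  also have "\<dots> = - (e3 \<diamond> e3)"
    unfolding a1[symmetric] a3 by (simp add: m_diffL m_diffR a2 m_assoc[symmetric] m_minusL)
  finally have cc: "sr c \<diamond> c = - (e3 \<diamond> e3)" .
  then have "c = 0" by (rule neg_square_zero[OF se3])
  then have "e3 \<diamond> e3 = 0"
    using cc by simp
  then have y3: "ym \<diamond> ym \<diamond> ym = 0" using a3 by simp
  have "Pk ym 2 = ym \<diamond> (ym \<diamond> ym \<diamond> ym)"
    unfolding Pk_def by (simp add: numeral_eq_Suc m_e m_assoc)
  then have "N ym ^ 4 = 0" using N_pw_sa[OF sym, of 2] y3 by simp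
  then have "ym = 0" using N_eq0 by simp
  then have "yp = a" using a1 by simp
  then show ?thesis using yp by simp
qed

lemma KV_pos: "pos (sr b \<diamond> b)"
proof -
  have sa: "sa (sr b \<diamond> b)" unfolding sa_def by (simp add: sr_m sr_sr)
  show ?thesis
    by (rule approx_pos[OF sa KV_approx, of "N (sr b \<diamond> b)"]) auto
qed

lemma sumsq_zero:
  assumes "sr u \<diamond> u + sr v \<diamond> v = 0"
  shows "u = 0"
proof -
  have "sr v \<diamond> v = - (sr u \<diamond> u)" using assms by (simp add: eq_neg_iff_add_eq_0 add.commute)
  then have "pos (- (sr u \<diamond> u))" using KV_pos[of v] by simp
  then have "sr u \<diamond> u = 0" using pos_zero[OF KV_pos] by blast
  then have "N u ^ 2 = 0" using N_cstar[of u] by simp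
  then show ?thesis using N_eq0 by simp
qed

lemma sqrt_B:
  assumes chb: "ch b = 0"
  shows "\<exists>s0. (\<exists>d. ch d = 0 \<and> s0 = sr d \<diamond> d) \<and> s0 \<diamond> s0 = sr b \<diamond> b \<and>
             (\<forall>s. (\<exists>d. s = sr d \<diamond> d) \<and> s \<diamond> s = sr b \<diamond> b \<longrightarrow> s = s0)"
proof -
  define a where "a = sr b \<diamond> b"
  have sa: "sa a" unfolding a_def sa_def by (simp add: sr_m sr_sr)
  have cha: "ch a = 0" unfolding a_def using chb by (simp add: ch_m)
  define S where "S = {-N a..N a}"
  have c1': "continuous_on S (\<lambda>t. sqrt (max t 0))" by (intro continuous_intros)
  have c2': "continuous_on S (\<lambda>t. sqrt (sqrt (max t 0)))" by (intro continuous_intros)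
  obtain s0 where s0: "approx a (\<lambda>t. sqrt (max t 0)) s0" using approx_exists[OF sa c1'[unfolded S_def]] by blast
  obtain d0 where d0: "approx a (\<lambda>t. sqrt (sqrt (max t 0))) d0" using approx_exists[OF sa c2'[unfolded S_def]] by blast
  have chs0: "ch s0 = 0" by (rule approx_ch[OF s0 cha]) simp
  have chd0: "ch d0 = 0" by (rule approx_ch[OF d0 cha]) simp
  have sd0: "sa d0" using approx_sa[OF d0 sa] .
  have "approx a (\<lambda>t. sqrt (max t 0)) (d0 \<diamond> d0)"
    by (rule approx_mult_cong[OF sa d0 d0 c2'[unfolded S_def] c2'[unfolded S_def]]) simp
  then have dd: "d0 \<diamond> d0 = s0" using approx_unique[OF sa _ s0] by blast
  have s0d: "s0 = sr d0 \<diamond> d0" using dd sd0 unfolding sa_def by simp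
  have "approx a (\<lambda>t. max t 0) (s0 \<diamond> s0)"
    by (rule approx_mult_cong[OF sa s0 s0 c1'[unfolded S_def] c1'[unfolded S_def]]) simp
  then have ss: "s0 \<diamond> s0 = a" using approx_unique[OF sa _ KV_approx[of b, folded a_def]] by blast
  have uniq: "s = s0" if s: "s = sr d \<diamond> d" "s \<diamond> s = a" for s d
  proof -
    have "s \<diamond> a = a \<diamond> s" unfolding s(2)[symmetric] by (simp add: m_assoc)
    then have com: "s \<diamond> s0 = s0 \<diamond> s" by (rule approx_comm[OF s0])
    have ssa: "sa s" unfolding s(1) sa_def by (simp add: sr_m sr_sr)
    define z where "z = s - s0"
    have sz: "sa z" unfolding z_def using ssa s0d unfolding sa_def by (simp add: sr_diff sr_m sr_sr)
    have z0: "z \<diamond> (s + s0) = 0"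
      unfolding z_def using s(2) ss com by (simp add: m_distL m_diffL)
    define u where "u = d \<diamond> z"
    define v where "v = d0 \<diamond> z"
    have "sr u \<diamond> u + sr v \<diamond> v = z \<diamond> (s + s0) \<diamond> z"
      unfolding u_def v_def using sz sd0 s(1) s0d unfolding sa_def
      by (simp add: sr_m m_assoc m_distL m_distR)
    also have "\<dots> = 0" using z0 by simp
    finally have uv: "sr u \<diamond> u + sr v \<diamond> v = 0" .
    have u0: "u = 0" by (rule sumsq_zero[OF uv])
    have v0: "v = 0" by (rule sumsq_zero) (use uv in \<open>simp add: add.commute\<close>)
    have "s \<diamond> z = 0" using u0 s(1) unfolding u_def by (simp add: m_assoc)
    moreover have "s0 \<diamond> z = 0" using v0 s0d unfolding v_def by (simp add: m_assoc)
    ultimately have "z \<diamond> z = 0" unfolding z_def by (simp add: m_diffL)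
    then have "N z ^ 2 = 0" using N_cstar[of z] sz unfolding sa_def by simp
    then have "z = 0" using N_eq0 by simp
    then show ?thesis unfolding z_def by simp
  qed
  show ?thesis
    using chd0 s0d ss uniq unfolding a_def by blast
qed

end


locale cstarA =
  fixes sm :: "complex \<Rightarrow> 'a::{real_normed_algebra,banach} \<Rightarrow> 'a"
    and st :: "'a \<Rightarrow> 'a"
  assumes CA: "cstar_algebra sm st"
begin

lemmas CAx = CA[unfolded cstar_algebra_def complex_vs_def]

lemma sm_add: "sm c (x + y) = sm c x + sm c y"
  using CAx by metis

lemma sm_addc: "sm (c + d) x = sm c x + sm d x"
  using CAx by metis

lemma sm_multc: "sm (c * d) x = sm c (sm d x)"
  using CAx by metis

lemma sm_one: "sm 1 x = x"
  using CAx by metis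

lemma sm_real: "sm (complex_of_real r) x = scaleR r x"
  using CAx by metis

lemma sm_mL: "sm c (x * y) = sm c x * y"
  using CAx by metis

lemma sm_mR: "sm c (x * y) = x * sm c y"
  using CAx by metis

lemma norm_sm: "norm (sm c x) = cmod c * norm x"
  using CAx by metis

lemma st_add: "st (x + y) = st x + st y"
  using CAx by metis

lemma st_sm: "st (sm c x) = sm (cnj c) (st x)"
  using CAx by metis

lemma st_mult: "st (x * y) = st y * st x"
  using CAx by metis

lemma st_st: "st (st x) = x"
  using CAx by metis

lemma cstar_id: "norm (st x * x) = (norm x)^2"
  using CAx by metis



lemma sm_zero[simp]: "sm 0 x = 0"
  using sm_addc[of 0 0 x] by simp

lemma sm_zero2[simp]: "sm c 0 = 0"
  using sm_add[of c 0 0] by simp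

lemma sm_minus: "sm c (- x) = - sm c x"
  using sm_add[of c x "-x"] by (simp add: eq_neg_iff_add_eq_0 add.commute)

lemma sm_minusc: "sm (- c) x = - sm c x"
  using sm_addc[of c "-c" x] by (simp add: eq_neg_iff_add_eq_0 add.commute)

lemma sm_diff: "sm c (x - y) = sm c x - sm c y"
  using sm_add[of c x "-y"] by (simp add: sm_minus)

lemma sm_diffc: "sm (c - d) x = sm c x - sm d x"
  using sm_addc[of c "-d" x] by (simp add: sm_minusc)

lemma sm_scaleR: "sm c (scaleR r x) = scaleR r (sm c x)"
  using sm_multc[of c "of_real r" x] sm_multc[of "of_real r" c x] by (simp add: sm_real mult.commute)

lemma st_zero[simp]: "st 0 = 0"
  using st_add[of 0 0] by simp

lemma st_minus: "st (- x) = - st x"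
  using st_add[of x "-x"] by (simp add: eq_neg_iff_add_eq_0 add.commute)

lemma st_diff: "st (x - y) = st x - st y"
  using st_add[of x "-y"] by (simp add: st_minus)

lemma st_scaleR: "st (scaleR r x) = scaleR r (st x)"
  using st_sm[of "of_real r" x] by (simp add: sm_real)

lemma norm_st: "norm (st x) = norm x"
proof -
  have le: "norm y \<le> norm (st y)" for y
  proof (cases "y = 0")
    case False
    have "(norm y)^2 = norm (st y * y)" by (simp add: cstar_id)
    also have "\<dots> \<le> norm (st y) * norm y" by (rule norm_mult_ineq)
    finally have "norm y * norm y \<le> norm (st y) * norm y" by (simp add: power2_eq_square)
    then show ?thesis using False by simp
  qed simp
  show ?thesis using le[of x] le[of "st x"] by (simp add: st_st)
qed

text \<open>Left action of the unitization on the algebra\<close>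

definition L :: "complex \<times> 'a \<Rightarrow> 'a \<Rightarrow> 'a" where
  "L w z = sm (fst w) z + snd w * z"

lemma L_bound: "norm (L w z) \<le> (cmod (fst w) + norm (snd w)) * norm z"
proof -
  have "norm (L w z) \<le> norm (sm (fst w) z) + norm (snd w * z)" unfolding L_def by (rule norm_triangle_ineq)
  also have "\<dots> \<le> cmod (fst w) * norm z + norm (snd w) * norm z"
    by (simp add: norm_sm norm_mult_ineq)
  finally show ?thesis by (simp add: algebra_simps)
qed

lemma L_zero[simp]: "L w 0 = 0" unfolding L_def by simp

lemma L_scaleR: "L w (scaleR r z) = scaleR r (L w z)"
  unfolding L_def by (simp add: sm_scaleR scaleR_right_distrib)

definition uop :: "complex \<times> 'a \<Rightarrow> real" where
  "uop w = (SUP z\<in>{z. norm z \<le> 1}. norm (L w z))"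

lemma uop_bdd: "bdd_above ((\<lambda>z. norm (L w z)) ` {z. norm z \<le> 1})"
proof (rule bdd_aboveI2)
  fix z assume z: "z \<in> {z::'a. norm z \<le> 1}"
  have "norm (L w z) \<le> (cmod (fst w) + norm (snd w)) * norm z" by (rule L_bound)
  also have "\<dots> \<le> (cmod (fst w) + norm (snd w)) * 1" by (rule mult_left_mono) (use z in auto)
  finally show "norm (L w z) \<le> cmod (fst w) + norm (snd w)" by simp
qed

lemma uop_upper: "norm z \<le> 1 \<Longrightarrow> norm (L w z) \<le> uop w"
  unfolding uop_def by (rule cSUP_upper[OF _ uop_bdd]) simp

lemma uop_least: "(\<And>z. norm z \<le> 1 \<Longrightarrow> norm (L w z) \<le> c) \<Longrightarrow> uop w \<le> c"
  unfolding uop_def by (rule cSUP_least) (auto intro: exI[of _ 0])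

lemma uop_nonneg: "0 \<le> uop w"
  using uop_upper[of 0 w] by simp

lemma uop_scale: "norm (L w z) \<le> uop w * norm z"
proof (cases "z = 0")
  case False
  define z' where "z' = scaleR (1 / norm z) z"
  have "norm z' \<le> 1" unfolding z'_def using False by simp
  then have "norm (L w z') \<le> uop w" by (rule uop_upper)
  moreover have "norm (L w z') = norm (L w z) / norm z"
    unfolding z'_def L_scaleR using False by simp
  ultimately show ?thesis using False by (simp add: field_simps)
qed simp

lemma uop_bound: "uop w \<le> cmod (fst w) + norm (snd w)"
proof (rule uop_least)
  fix z :: 'a assume z: "norm z \<le> 1"
  have "norm (L w z) \<le> (cmod (fst w) + norm (snd w)) * norm z" by (rule L_bound)
  also have "\<dots> \<le> (cmod (fst w) + norm (snd w)) * 1" by (rule mult_left_mono) (use z in auto)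
  finally show "norm (L w z) \<le> cmod (fst w) + norm (snd w)" by simp
qed


definition um :: "complex \<times> 'a \<Rightarrow> complex \<times> 'a \<Rightarrow> complex \<times> 'a" where
  "um w v = (fst w * fst v, sm (fst w) (snd v) + sm (fst v) (snd w) + snd w * snd v)"

definition ue :: "complex \<times> 'a" where "ue = (1, 0)"

definition ucs :: "complex \<Rightarrow> complex \<times> 'a \<Rightarrow> complex \<times> 'a" where
  "ucs c w = (c * fst w, sm c (snd w))"

definition ust :: "complex \<times> 'a \<Rightarrow> complex \<times> 'a" where
  "ust w = (cnj (fst w), st (snd w))"

definition uN :: "complex \<times> 'a \<Rightarrow> real" where
  "uN w = max (cmod (fst w)) (uop w)"

lemmas smsimps = sm_add sm_addc sm_multc[symmetric] sm_one sm_mL[symmetric] sm_mR[symmetric]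
  sm_diff sm_diffc sm_minus sm_minusc

lemma L_um: "L (um w v) z = L w (L v z)"
  unfolding L_def um_def by (simp add: smsimps algebra_simps mult.commute)

lemma L_add: "L (w + v) z = L w z + L v z"
  unfolding L_def by (simp add: smsimps algebra_simps)

lemma L_ucs: "L (ucs c w) z = sm c (L w z)"
  unfolding L_def ucs_def by (simp add: smsimps algebra_simps)

lemma L_ue: "L ue z = z"
  unfolding L_def ue_def by (simp add: sm_one)

lemma L_0a: "L (0, a) z = a * z"
  unfolding L_def by simp

lemma L_l0: "L (l, 0) z = sm l z"
  unfolding L_def by simp

lemma uop_add: "uop (w + v) \<le> uop w + uop v"
proof (rule uop_least)
  fix z :: 'a assume z: "norm z \<le> 1"
  have "norm (L (w + v) z) \<le> norm (L w z) + norm (L v z)" unfolding L_add by (rule norm_triangle_ineq)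
  also have "\<dots> \<le> uop w + uop v" using uop_upper[OF z] by (simp add: add_mono)
  finally show "norm (L (w + v) z) \<le> uop w + uop v" .
qed

lemma ucs_ucs: "ucs c (ucs d w) = ucs (c * d) w"
  unfolding ucs_def by (simp add: sm_multc mult.assoc)

lemma ucs_one: "ucs 1 w = w"
  unfolding ucs_def by (simp add: sm_one)

lemma uop_ucs_le: "uop (ucs c w) \<le> cmod c * uop w"
proof (rule uop_least)
  fix z :: 'a assume z: "norm z \<le> 1"
  have "norm (L (ucs c w) z) = cmod c * norm (L w z)" unfolding L_ucs by (rule norm_sm)
  also have "\<dots> \<le> cmod c * uop w" using uop_upper[OF z] by (simp add: mult_left_mono)
  finally show "norm (L (ucs c w) z) \<le> cmod c * uop w" .
qed

lemma uop_ucs: "uop (ucs c w) = cmod c * uop w"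
proof (cases "c = 0")
  case True
  have "uop (ucs c w) \<le> 0" using uop_ucs_le[of c w] True by simp
  then show ?thesis using uop_nonneg True by (simp add: order_antisym)
next
  case False
  have "uop w = uop (ucs (inverse c) (ucs c w))" using False by (simp add: ucs_ucs ucs_one)
  also have "\<dots> \<le> cmod (inverse c) * uop (ucs c w)" by (rule uop_ucs_le)
  finally have h: "uop w \<le> cmod (inverse c) * uop (ucs c w)" .
  have "cmod c * uop w \<le> cmod c * (cmod (inverse c) * uop (ucs c w))"
    by (rule mult_left_mono[OF h]) simp
  also have "\<dots> = uop (ucs c w)" using False by (simp add: norm_inverse)
  finally have "cmod c * uop w \<le> uop (ucs c w)" .
  then show ?thesis using uop_ucs_le[of c w] by simp
qed

lemma uop_um: "uop (um w v) \<le> uop w * uop v"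
proof (rule uop_least)
  fix z :: 'a assume z: "norm z \<le> 1"
  have "norm (L (um w v) z) = norm (L w (L v z))" by (simp add: L_um)
  also have "\<dots> \<le> uop w * norm (L v z)" by (rule uop_scale)
  also have "\<dots> \<le> uop w * uop v" using uop_upper[OF z] uop_nonneg by (simp add: mult_left_mono)
  finally show "norm (L (um w v) z) \<le> uop w * uop v" .
qed

lemma st_L: "st (L w z) * x = st z * L (ust w) x"
  unfolding L_def ust_def by (simp add: st_add st_sm st_mult smsimps algebra_simps)

lemma ust_ust: "ust (ust w) = w"
  unfolding ust_def by (simp add: st_st)

lemma uop_ust_ge: "(uop w)^2 \<le> uop (um (ust w) w)"
proof -
  have "norm (L w z) \<le> sqrt (uop (um (ust w) w))" if z: "norm z \<le> 1" for z
  proof -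
    have "(norm (L w z))^2 = norm (st (L w z) * L w z)" by (simp add: cstar_id)
    also have "\<dots> = norm (st z * L (um (ust w) w) z)" by (simp add: st_L L_um)
    also have "\<dots> \<le> norm (st z) * norm (L (um (ust w) w) z)" by (rule norm_mult_ineq)
    also have "\<dots> \<le> 1 * uop (um (ust w) w)"
      using z uop_upper[OF z] by (intro mult_mono) (auto simp: norm_st)
    finally have "(norm (L w z))^2 \<le> uop (um (ust w) w)" by simp
    then show ?thesis by (simp add: real_le_rsqrt)
  qed
  then have "uop w \<le> sqrt (uop (um (ust w) w))" by (rule uop_least)
  then show ?thesis using uop_nonneg by (metis power2_le_imp_le real_sqrt_le_iff real_sqrt_pow2 uop_nonneg power_mono)
qed

lemma uop_ust: "uop (ust w) = uop w"
proof -
  have le: "uop v \<le> uop (ust v)" for v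
  proof (cases "uop v = 0")
    case False
    have "(uop v)^2 \<le> uop (ust v) * uop v"
      using uop_ust_ge[of v] uop_um[of "ust v" v] by simp
    then show ?thesis using False uop_nonneg[of v] by (simp add: power2_eq_square)
  qed (simp add: uop_nonneg)
  show ?thesis using le[of w] le[of "ust w"] by (simp add: ust_ust)
qed

lemma uop_cstar: "uop (um (ust w) w) = (uop w)^2"
  using uop_ust_ge[of w] uop_um[of "ust w" w] by (simp add: uop_ust power2_eq_square)

lemma uop_A: "uop (0, a) = norm a"
proof (rule order_antisym)
  show "uop (0, a) \<le> norm a" using uop_bound[of "(0, a)"] by simp
  show "norm a \<le> uop (0, a)"
  proof (cases "a = 0")
    case False
    define z where "z = scaleR (1 / norm a) (st a)"
    have "norm z \<le> 1" unfolding z_def using False by (simp add: norm_st)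
    then have "norm (L (0, a) z) \<le> uop (0, a)" by (rule uop_upper)
    moreover have "norm (L (0, a) z) = norm a"
    proof -
      have "norm (a * st a) = (norm (st a))^2" using cstar_id[of "st a"] by (simp add: st_st)
      then show ?thesis unfolding L_0a z_def using False
        by (simp add: norm_st power2_eq_square)
    qed
    ultimately show ?thesis by simp
  qed (simp add: uop_nonneg)
qed

lemma uop_scalar: "uop (l, 0) \<le> cmod l"
  using uop_bound[of "(l, 0)"] by simp

lemma norm_snd_uop: "norm (snd w) \<le> uop w + cmod (fst w)"
proof -
  have "(0, snd w) = w + (- fst w, 0)" by (simp add: prod_eq_iff)
  then have "uop (0, snd w) \<le> uop w + uop (- fst w, 0)" using uop_add by metis
  then show ?thesis using uop_A uop_scalar[of "- fst w"] by simp
qed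

lemma ucstar_U: "ucstar um ue ucs ust uN fst (1/3) 2"
proof (unfold_locales, goal_cases)
  case (1 x y z) show ?case unfolding um_def by (simp add: smsimps algebra_simps mult.commute mult.left_commute)
next
  case (2 x y z) show ?case unfolding um_def by (simp add: smsimps algebra_simps)
next
  case (3 x y z) show ?case unfolding um_def by (simp add: smsimps algebra_simps)
next
  case (4 x) show ?case unfolding um_def ue_def by (simp add: smsimps)
next
  case (5 x) show ?case unfolding um_def ue_def by (simp add: smsimps)
next
  case (6 c x y) show ?case unfolding ucs_def by (simp add: smsimps algebra_simps)
next
  case (7 c d x) show ?case unfolding ucs_def by (simp add: smsimps algebra_simps)
next
  case (8 c d x) show ?case unfolding ucs_def by (simp add: smsimps algebra_simps)
next
  case (9 x) show ?case unfolding ucs_def by (simp add: smsimps)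
next
  case (10 r x) show ?case unfolding ucs_def by (simp add: sm_real scaleR_conv_of_real prod_eq_iff)
next
  case (11 c x y) show ?case unfolding ucs_def um_def by (simp add: smsimps algebra_simps mult.commute mult.left_commute)
next
  case (12 x c y) show ?case unfolding ucs_def um_def by (simp add: smsimps algebra_simps mult.commute mult.left_commute)
next
  case (13 x y) show ?case unfolding ust_def by (simp add: st_add)
next
  case (14 c x) show ?case unfolding ust_def ucs_def by (simp add: st_sm)
next
  case (15 x y) show ?case unfolding ust_def um_def by (simp add: st_add st_sm st_mult smsimps algebra_simps)
next
  case (16 x) show ?case by (rule ust_ust)
next
  case (17 x y) show ?case unfolding uN_def
    using uop_add[of x y] norm_triangle_ineq[of "fst x" "fst y"] by auto
next
  case (18 c x) show ?case unfolding uN_def uop_ucs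
    by (simp add: ucs_def norm_mult max_mult_distrib_left)
next
  case (19 x y)
  have "cmod (fst (um x y)) \<le> max (cmod (fst x)) (uop x) * max (cmod (fst y)) (uop y)"
    unfolding um_def by (simp add: norm_mult, rule mult_mono) (simp_all add: le_max_iff_disj)
  moreover have "uop (um x y) \<le> max (cmod (fst x)) (uop x) * max (cmod (fst y)) (uop y)"
    using uop_um[of x y] uop_nonneg[of x] uop_nonneg[of y]
    by (meson max.cobounded2 mult_mono order_trans norm_ge_zero max.coboundedI1)
  ultimately show ?case unfolding uN_def by simp
next
  case (20 x)
  have "fst (um (ust x) x) = cnj (fst x) * fst x" unfolding um_def ust_def by simp
  then have "cmod (fst (um (ust x) x)) = (cmod (fst x))^2" by (simp add: norm_mult power2_eq_square)
  then show ?case unfolding uN_def uop_cstar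
    using uop_nonneg[of x] by (simp add: max_def power_mono)
next
  case 21 show ?case unfolding uN_def ue_def using uop_scalar[of 1] uop_nonneg by (simp add: max_def)
next
  case 22 show ?case by simp
next
  case (23 x)
  have "norm x \<le> cmod (fst x) + norm (snd x)" using norm_Pair_le[of "fst x" "snd x"] by simp
  also have "\<dots> \<le> 3 * uN x" unfolding uN_def using norm_snd_uop[of x] by simp
  finally show ?case by simp
next
  case (24 x)
  have "cmod (fst x) \<le> norm x" using norm_fst_le[of "fst x" "snd x"] by simp
  moreover have "norm (snd x) \<le> norm x" using norm_snd_le[of "snd x" "fst x"] by simp
  moreover have "uop x \<le> cmod (fst x) + norm (snd x)" by (rule uop_bound)
  moreover have "0 \<le> norm x" by simp
  ultimately show ?case unfolding uN_def by (simp only: max.bounded_iff) linarith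
next
  case (25 x y) show ?case by simp
next
  case (26 x y) show ?case unfolding um_def by simp
next
  case (27 c x) show ?case unfolding ucs_def by simp
next
  case 28 show ?case unfolding ue_def by simp
next
  case (29 x) show ?case unfolding uN_def by simp
qed

end


context cstarA
begin

lemma um_00: "um (0, x) (0, y) = (0, x * y)"
  unfolding um_def by simp

lemma ust_0: "ust (0, x) = (0, st x)"
  unfolding ust_def by simp

lemma sqrt_A: "\<exists>!s. cstar_positive st s \<and> s * s = st b * b"
proof -
  interpret U: ucstar um ue ucs ust uN fst "1/3" 2 by (rule ucstar_U)
  have ex: "\<exists>s0. (\<exists>d. fst d = 0 \<and> s0 = um (ust d) d) \<and> um s0 s0 = um (ust (0, b)) (0, b) \<and>
     (\<forall>s. (\<exists>d. s = um (ust d) d) \<and> um s s = um (ust (0, b)) (0, b) \<longrightarrow> s = s0)"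
    by (rule U.sqrt_B) simp
  then obtain s0 where s0: "\<exists>d. fst d = 0 \<and> s0 = um (ust d) d"
    "um s0 s0 = um (ust (0, b)) (0, b)"
    "\<And>s. (\<exists>d. s = um (ust d) d) \<and> um s s = um (ust (0, b)) (0, b) \<Longrightarrow> s = s0"
    by blast
  obtain d where d: "fst d = 0" "s0 = um (ust d) d" using s0(1) by blast
  define dA where "dA = snd d"
  have dd: "d = (0, dA)" unfolding dA_def using d(1) by (simp add: prod_eq_iff)
  define sA where "sA = st dA * dA"
  have s0A: "s0 = (0, sA)" unfolding d(2) dd sA_def by (simp add: ust_0 um_00)
  have sq: "sA * sA = st b * b"
    using s0(2) unfolding s0A by (simp add: ust_0 um_00)
  show ?thesis
  proof (rule ex1I[of _ sA])
    show "cstar_positive st sA \<and> sA * sA = st b * b"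
      unfolding cstar_positive_def sA_def using sq sA_def by blast
  next
    fix s assume s: "cstar_positive st s \<and> s * s = st b * b"
    then obtain d' where d': "s = st d' * d'" unfolding cstar_positive_def by blast
    have "(0, s) = s0"
    proof (rule s0(3), intro conjI exI)
      show "(0, s) = um (ust (0, d')) (0, d')" using d' by (simp add: ust_0 um_00)
      show "um (0, s) (0, s) = um (ust (0, b)) (0, b)" using s by (simp add: ust_0 um_00)
    qed
    then show "s = sA" unfolding s0A by simp
  qed
qed

lemma sqrt_props:
  assumes "cstar_positive st p"
  shows "cstar_positive st (cstar_sqrt st p) \<and> cstar_sqrt st p * cstar_sqrt st p = p"
proof -
  obtain b where b: "p = st b * b" using assms cstar_positive_def by blast
  have "\<exists>!s. cstar_positive st s \<and> s * s = p" using sqrt_A[of b] b by simp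
  then show ?thesis unfolding cstar_sqrt_def by (rule theI')
qed

lemma sqrt_eq:
  assumes "cstar_positive st p" "cstar_positive st s" "s * s = p"
  shows "cstar_sqrt st p = s"
proof -
  obtain b where b: "p = st b * b" using assms cstar_positive_def by blast
  have "\<exists>!s. cstar_positive st s \<and> s * s = p" using sqrt_A[of b] b by simp
  then show ?thesis unfolding cstar_sqrt_def using assms by (intro the1_equality) auto
qed

lemma pos_scale:
  assumes "cstar_positive st s" "0 \<le> r"
  shows "cstar_positive st (scaleR r s)"
proof -
  obtain d where d: "s = st d * d" using assms cstar_positive_def by blast
  have "scaleR r s = st (scaleR (sqrt r) d) * (scaleR (sqrt r) d)"
    unfolding d using assms(2) by (simp add: st_scaleR)
  then show ?thesis unfolding cstar_positive_def by blast
qed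

end

locale ipmod = cstarA sm st
  for sm :: "complex \<Rightarrow> 'a::{real_normed_algebra,banach} \<Rightarrow> 'a" and st +
  fixes smX :: "complex \<Rightarrow> 'x::ab_group_add \<Rightarrow> 'x" and act :: "'x \<Rightarrow> 'a \<Rightarrow> 'x"
    and ip :: "'x \<Rightarrow> 'x \<Rightarrow> 'a"
  assumes IM: "ip_module sm st smX act ip"
begin

lemmas IMx = IM[unfolded ip_module_def complex_vs_def]

lemma smX_add: "smX c (x + y) = smX c x + smX c y" using IMx by metis
lemma smX_addc: "smX (c + d) x = smX c x + smX d x" using IMx by metis
lemma smX_multc: "smX (c * d) x = smX c (smX d x)" using IMx by metis
lemma smX_one: "smX 1 x = x" using IMx by metis
lemma ip_add2: "ip x (y + z) = ip x y + ip x z" using IMx by metis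
lemma ip_sm2: "ip x (smX c y) = sm c (ip x y)" using IMx by metis
lemma ip_act2: "ip x (act y a) = ip x y * a" using IMx by metis
lemma ip_sym: "ip x y = st (ip y x)" using IMx by metis
lemma ip_pos: "cstar_positive st (ip x x)" using IMx by metis
lemma ip_def0: "ip x x = 0 \<longleftrightarrow> x = 0" using IMx by metis

lemma smX_zero: "smX 0 x = 0"
  using smX_addc[of 0 0 x] by simp

lemma smX_minusc: "smX (- c) x = - smX c x"
  using smX_addc[of c "-c" x] by (simp add: smX_zero eq_neg_iff_add_eq_0 add.commute)

lemma smX_m1: "smX (-1) x = - x"
  using smX_minusc[of 1 x] by (simp add: smX_one)

lemma ip_zero2: "ip x 0 = 0"
  using ip_add2[of x 0 0] by simp

lemma ip_minus2: "ip x (- y) = - ip x y"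
  using ip_add2[of x y "-y"] by (simp add: ip_zero2 eq_neg_iff_add_eq_0 add.commute)

lemma ip_diff2: "ip x (y - z) = ip x y - ip x z"
  using ip_add2[of x y "-z"] by (simp add: ip_minus2)

lemma ip_add1: "ip (x + y) z = ip x z + ip y z"
  by (metis ip_sym ip_add2 st_add)

lemma ip_sm1: "ip (smX c x) y = sm (cnj c) (ip x y)"
  by (metis ip_sym ip_sm2 st_sm)

lemma ip_act1: "ip (act x a) y = st a * ip x y"
  by (metis ip_sym ip_act2 st_mult)

lemma ip_minus1: "ip (- x) y = - ip x y"
  by (metis ip_sym ip_minus2 st_minus)

lemma ip_diff1: "ip (x - y) z = ip x z - ip y z"
  by (metis ip_sym ip_diff2 st_diff)

lemma zero_test:
  assumes "ip D D = 0" shows "D = 0"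
  using assms ip_def0 by simp

lemma expand:
  "ip (u + smX c v) (u + smX c v) = ip u u + sm c (ip u v) + sm (cnj c) (ip v u) + sm (cnj c * c) (ip v v)"
  by (simp add: ip_add1 ip_add2 ip_sm1 ip_sm2 sm_multc sm_add algebra_simps)

lemma polar:
  "ip u v + ip u v + ip u v + ip u v =
     ip (u + smX 1 v) (u + smX 1 v) - ip (u + smX (-1) v) (u + smX (-1) v)
     + sm (- \<i>) (ip (u + smX \<i> v) (u + smX \<i> v) - ip (u + smX (- \<i>) v) (u + smX (- \<i>) v))"
  unfolding expand
  by (simp add: sm_diff sm_add sm_multc[symmetric] sm_one sm_minusc algebra_simps)

end


lemma four_cancel:
  fixes a b :: "'a::real_vector"
  assumes "a + a + a + a = b + b + b + b"
  shows "a = b"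
proof -
  have f: "x + x + x + x = scaleR 4 x" for x :: 'a
  proof -
    have "scaleR 4 x = scaleR (1 + 1 + 1 + 1) x" by simp
    also have "\<dots> = x + x + x + x" by (simp only: scaleR_left_distrib scaleR_one)
    finally show ?thesis by simp
  qed
  show ?thesis using assms unfolding f by simp
qed

theorem theorem4p6:
  fixes sm :: "complex \<Rightarrow> 'a::{real_normed_algebra,banach} \<Rightarrow> 'a"
    and st :: "'a \<Rightarrow> 'a"
    and smX :: "complex \<Rightarrow> 'x::ab_group_add \<Rightarrow> 'x" and actX :: "'x \<Rightarrow> 'a \<Rightarrow> 'x"
    and ipX :: "'x \<Rightarrow> 'x \<Rightarrow> 'a"
    and smY :: "complex \<Rightarrow> 'y::ab_group_add \<Rightarrow> 'y" and actY :: "'y \<Rightarrow> 'a \<Rightarrow> 'y"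
    and ipY :: "'y \<Rightarrow> 'y \<Rightarrow> 'a"
    and T :: "'x \<Rightarrow> 'y" and \<gamma> :: real
  assumes "cstar_algebra sm st"
    and "ip_module sm st smX actX ipX"
    and "ip_module sm st smY actY ipY"
    and "\<exists>x. T x \<noteq> 0"
    and "\<gamma> > 0"
  shows "((\<forall>x y. ipY (T x) (T y) = scaleR (\<gamma>\<^sup>2) (ipX x y))
            \<longleftrightarrow> (Alinear_map smX actX smY actY T \<and>
                 (\<forall>x. mod_abs st ipY (T x) = scaleR \<gamma> (mod_abs st ipX x))))
       \<and> ((Alinear_map smX actX smY actY T \<and>
                 (\<forall>x. mod_abs st ipY (T x) = scaleR \<gamma> (mod_abs st ipX x)))
            \<longleftrightarrow> (clinear_map smX smY T \<and>
                 (\<forall>x. mod_abs st ipY (T x) = scaleR \<gamma> (mod_abs st ipX x))))"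
proof -
  interpret A: cstarA sm st by (rule cstarA.intro[OF assms(1)])
  interpret X: ipmod sm st smX actX ipX
    by (rule ipmod.intro[OF cstarA.intro[OF assms(1)] ipmod_axioms.intro[OF assms(2)]])
  interpret Y: ipmod sm st smY actY ipY
    by (rule ipmod.intro[OF cstarA.intro[OF assms(1)] ipmod_axioms.intro[OF assms(3)]])
  define P1 where "P1 \<longleftrightarrow> (\<forall>x y. ipY (T x) (T y) = scaleR (\<gamma>\<^sup>2) (ipX x y))"
  define MA where "MA \<longleftrightarrow> (\<forall>x. mod_abs st ipY (T x) = scaleR \<gamma> (mod_abs st ipX x))"
  have zt: "D = 0" if "D = T u - V" "\<And>w. ipY D (T w) = 0" "ipY D V = 0" for D u V
  proof (rule Y.zero_test)
    have "ipY D D = ipY D (T u) - ipY D V" using that(1) by (simp add: Y.ip_diff2)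
    then show "ipY D D = 0" using that(2,3) by simp
  qed
  have P1_Alin: "Alinear_map smX actX smY actY T" if P: P1
  proof -
    have P': "ipY (T x) (T y) = scaleR (\<gamma>\<^sup>2) (ipX x y)" for x y using P unfolding P1_def by blast
    have add: "T (x + y) = T x + T y" for x y
    proof -
      define D where "D = T (x + y) - (T x + T y)"
      have 1: "ipY D (T w) = 0" for w
        unfolding D_def by (simp add: Y.ip_diff1 Y.ip_add1 P' X.ip_add1 scaleR_right_distrib)
      have 2: "ipY D (T x + T y) = 0" using 1 by (simp add: Y.ip_add2)
      have "D = 0" by (rule zt[OF D_def 1 2])
      then show ?thesis unfolding D_def by simp
    qed
    have scal: "T (smX c x) = smY c (T x)" for c x
    proof -
      define D where "D = T (smX c x) - smY c (T x)"
      have 1: "ipY D (T w) = 0" for w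
        unfolding D_def by (simp add: Y.ip_diff1 Y.ip_sm1 P' X.ip_sm1 A.sm_scaleR)
      have 2: "ipY D (smY c (T x)) = 0" using 1 by (simp add: Y.ip_sm2)
      have "D = 0" by (rule zt[OF D_def 1 2])
      then show ?thesis unfolding D_def by simp
    qed
    have actl: "T (actX x a) = actY (T x) a" for x a
    proof -
      define D where "D = T (actX x a) - actY (T x) a"
      have 1: "ipY D (T w) = 0" for w
        unfolding D_def by (simp add: Y.ip_diff1 Y.ip_act1 P' X.ip_act1)
      have 2: "ipY D (actY (T x) a) = 0" using 1 by (simp add: Y.ip_act2)
      have "D = 0" by (rule zt[OF D_def 1 2])
      then show ?thesis unfolding D_def by simp
    qed
    show ?thesis unfolding Alinear_map_def clinear_map_def using add scal actl by blast
  qed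
  have P1_MA: MA if P: P1
  proof -
    have P': "ipY (T x) (T y) = scaleR (\<gamma>\<^sup>2) (ipX x y)" for x y using P unfolding P1_def by blast
    show ?thesis unfolding MA_def
    proof
      fix x
      define s where "s = cstar_sqrt st (ipX x x)"
      have s: "cstar_positive st s" "s * s = ipX x x"
        using A.sqrt_props[OF X.ip_pos[of x]] unfolding s_def by auto
      have "cstar_sqrt st (ipY (T x) (T x)) = scaleR \<gamma> s"
      proof (rule A.sqrt_eq)
        show "cstar_positive st (ipY (T x) (T x))" by (rule Y.ip_pos)
        show "cstar_positive st (scaleR \<gamma> s)" using A.pos_scale[OF s(1)] assms(5) by simp
        show "scaleR \<gamma> s * scaleR \<gamma> s = ipY (T x) (T x)"
          using s(2) by (simp add: P' power2_eq_square)
      qed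
      then show "mod_abs st ipY (T x) = scaleR \<gamma> (mod_abs st ipX x)"
        unfolding mod_abs_def s_def by simp
    qed
  qed
  have Alin_Clin: "clinear_map smX smY T" if "Alinear_map smX actX smY actY T"
    using that unfolding Alinear_map_def by blast
  have Clin_P1: P1 if L: "clinear_map smX smY T" and M: MA
  proof -
    have Ladd: "T (x + y) = T x + T y" for x y using L unfolding clinear_map_def by blast
    have Lsm: "T (smX c x) = smY c (T x)" for c x using L unfolding clinear_map_def by blast
    have nn: "ipY (T x) (T x) = scaleR (\<gamma>\<^sup>2) (ipX x x)" for x
    proof -
      define SX where "SX = mod_abs st ipX x"
      define SY where "SY = mod_abs st ipY (T x)"
      have "SX * SX = ipX x x" unfolding SX_def mod_abs_def using A.sqrt_props[OF X.ip_pos[of x]] by auto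
      moreover have "SY * SY = ipY (T x) (T x)" unfolding SY_def mod_abs_def using A.sqrt_props[OF Y.ip_pos[of "T x"]] by auto
      moreover have "SY = scaleR \<gamma> SX" unfolding SY_def SX_def using M unfolding MA_def by blast
      ultimately show ?thesis by (simp add: power2_eq_square)
    qed
    have q: "ipY (T x + smY c (T y)) (T x + smY c (T y)) = scaleR (\<gamma>\<^sup>2) (ipX (x + smX c y) (x + smX c y))"
      for x y c
    proof -
      have "T x + smY c (T y) = T (x + smX c y)" by (simp add: Ladd Lsm)
      then show ?thesis using nn by simp
    qed
    show ?thesis unfolding P1_def
    proof (intro allI)
      fix x y
      have "ipY (T x) (T y) + ipY (T x) (T y) + ipY (T x) (T y) + ipY (T x) (T y) =
            scaleR (\<gamma>\<^sup>2) (ipX x y + ipX x y + ipX x y + ipX x y)"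
        unfolding Y.polar X.polar q
        by (simp add: scaleR_right_diff_distrib scaleR_right_distrib A.sm_scaleR A.sm_diff)
      also have "\<dots> = scaleR (\<gamma>\<^sup>2) (ipX x y) + scaleR (\<gamma>\<^sup>2) (ipX x y) + scaleR (\<gamma>\<^sup>2) (ipX x y) + scaleR (\<gamma>\<^sup>2) (ipX x y)"
        by (simp add: scaleR_right_distrib)
      finally show "ipY (T x) (T y) = scaleR (\<gamma>\<^sup>2) (ipX x y)" by (rule four_cancel)
    qed
  qed
  have "(P1 \<longleftrightarrow> Alinear_map smX actX smY actY T \<and> MA) \<and>
        (Alinear_map smX actX smY actY T \<and> MA \<longleftrightarrow> clinear_map smX smY T \<and> MA)"
    using P1_Alin P1_MA Alin_Clin Clin_P1 by blast
  then show ?thesis unfolding P1_def MA_def .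
qed

end
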